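(* Let $\rho$ be a $(0,\infty)$-valued random variable with $\mathbb E\rho=1$, $d_0\ge0$, and $d_{k+1}=\mathbb E\big[\frac{c_k(\mu_k\rho+d_k)}{c_k+(\mu_k\rho+d_k)}\big]$, where $c_k=c^k\bar c_k$, $\mu_k=\mu^k\bar\mu_k$ with $c,\mu\in(0,\infty)$, $\bar c_k\sim L_c(k)k^a$, $\bar\mu_k\sim L_\mu(k)k^b$ ($a,b\in\mathbb R$, $L_c,L_\mu$ slowly varying), and suppose $\bar K=\lim_k\bar K_k\in[0,\infty]$ exists, where $\bar K_k=\bar\mu_k/\bar c_k$. Let $\sigma_k=\sum_{l=0}^{k-1}1/c_l$. Then: (A) if $c<\mu$, or $c=\mu$ and $\bar K=\infty$: $\lim_k d_k/c_k=1/c$; (B) if $c=\mu$ and $\bar K\in(0,\infty)$: $\lim_kd_k/c_k=\bar M/c$ with $\bar M\in(0,1)$ the unique solution of $\bar M=\mathbb E\big[\frac{c\bar K\rho+\bar M}{c+(c\bar K\rho+\bar M)}\big]$; (C1) if $c=\mu<1$ and $\bar K=0$: $\lim_kd_k/c_k=(1-c)/c$; (C2) if $c=\mu>1$, $\bar K=0$ and $\sum_k\bar K_k=\infty$: $\lim_kd_k/\mu_k=1/(\mu-1)$; (C3) if $1>c>\mu$ and $\bar K=0$, or $1=c>\mu$, $\bar K=0$ and $a<1$: $\lim_k\sigma_kd_k=1$. *)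

theory Defs
  imports "HOL-Probability.Probability" "HOL-Library.Landau_Symbols"
begin

definition slowly_varying :: "(real \<Rightarrow> real) \<Rightarrow> bool" where
  "slowly_varying L \<longleftrightarrow>
     L \<in> borel_measurable borel \<and> (\<forall>x>0. L x > 0) \<and>
     (\<forall>t>0. ((\<lambda>x. L (t * x) / L x) \<longlongrightarrow> 1) at_top)"

end

theory Submission
  imports Defs
begin
lemma uct:
  fixes h :: "real \<Rightarrow> real" and e :: real
  assumes hm[measurable]: "h \<in> borel_measurable borel"
    and lim: "\<And>v. ((\<lambda>u. h (u+v) - h u) \<longlongrightarrow> 0) at_top"
    and e: "e > 0"
  shows "\<exists>U. \<forall>u\<ge>U. \<forall>v\<in>{0..1}. \<bar>h (u+v) - h u\<bar> < e"
proof (rule ccontr)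
  assume "\<not> ?thesis"
  then have "\<forall>n::nat. \<exists>u\<ge>real n. \<exists>v\<in>{0..1}. \<bar>h (u+v) - h u\<bar> \<ge> e"
    by (simp add: not_less)
  then obtain x y where xy: "\<And>n. x n \<ge> real n" "\<And>n. y n \<in> {0..1}"
     "\<And>n. \<bar>h (x n + y n) - h (x n)\<bar> \<ge> e"
    by metis
  define V where "V n = {v\<in>{0..2}. \<forall>m\<ge>n. \<bar>h (x m + v) - h (x m)\<bar> < e/2}" for n
  define W where "W n = {v\<in>{0..2}. \<forall>m\<ge>n. \<bar>h ((x m + y m) + v) - h (x m + y m)\<bar> < e/2}" for n
  have Vs: "V n \<in> sets lborel" for n unfolding V_def by measurable
  have Ws: "W n \<in> sets lborel" for n unfolding W_def by measurable
  have xlim: "filterlim x at_top sequentially"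
    by (rule filterlim_at_top_mono[OF filterlim_real_sequentially]) (use xy in auto)
  have xylim: "filterlim (\<lambda>n. x n + y n) at_top sequentially"
  proof (rule filterlim_at_top_mono[OF filterlim_real_sequentially], rule always_eventually, rule allI)
    fix n show "real n \<le> x n + y n" using xy(1)[of n] xy(2)[of n] by auto
  qed
  have evV: "\<exists>n. v \<in> V n" if "v \<in> {0..2}" for v
  proof -
    have L: "((\<lambda>m. h (x m + v) - h (x m)) \<longlongrightarrow> 0) sequentially"
      using filterlim_compose[OF lim xlim] by simp
    have "eventually (\<lambda>m. \<bar>h (x m + v) - h (x m)\<bar> < e/2) sequentially"
      using order_tendstoD(2)[OF tendsto_rabs[OF L], of "e/2"] e by simp
    then obtain n where "\<forall>m\<ge>n. \<bar>h (x m + v) - h (x m)\<bar> < e/2"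
      by (auto simp: eventually_sequentially)
    then show ?thesis using that unfolding V_def by auto
  qed
  have evW: "\<exists>n. v \<in> W n" if "v \<in> {0..2}" for v
  proof -
    have L: "((\<lambda>m. h ((x m + y m) + v) - h (x m + y m)) \<longlongrightarrow> 0) sequentially"
      using filterlim_compose[OF lim xylim] by simp
    have "eventually (\<lambda>m. \<bar>h ((x m + y m) + v) - h (x m + y m)\<bar> < e/2) sequentially"
      using order_tendstoD(2)[OF tendsto_rabs[OF L], of "e/2"] e by simp
    then obtain n where "\<forall>m\<ge>n. \<bar>h ((x m + y m) + v) - h (x m + y m)\<bar> < e/2"
      by (auto simp: eventually_sequentially)
    then show ?thesis using that unfolding W_def by auto
  qed
  have UV: "(\<Union>n. V n) = {0..2}" using evV unfolding V_def by auto
  have UW: "(\<Union>n. W n) = {0..2}" using evW unfolding W_def by auto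
  have incV: "incseq V" unfolding V_def incseq_def by auto
  have incW: "incseq W" unfolding W_def incseq_def by auto
  have limV: "(\<lambda>n. emeasure lborel (V n)) \<longlonglongrightarrow> 2"
    using Lim_emeasure_incseq[of V lborel] Vs incV UV by auto
  have limW: "(\<lambda>n. emeasure lborel (W n)) \<longlonglongrightarrow> 2"
    using Lim_emeasure_incseq[of W lborel] Ws incW UW by auto
  have "ennreal (3/2) < 2" by (simp add: ennreal_less_iff)
  then have "eventually (\<lambda>n. ennreal (3/2) < emeasure lborel (V n)) sequentially"
    "eventually (\<lambda>n. ennreal (3/2) < emeasure lborel (W n)) sequentially"
    using order_tendstoD(1)[OF limV] order_tendstoD(1)[OF limW] by auto
  then obtain n where n: "ennreal (3/2) < emeasure lborel (V n)" "ennreal (3/2) < emeasure lborel (W n)"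
    by (metis (mono_tags, lifting) eventually_conj eventually_sequentially order_refl)
  define T where "T = (+) (- y n) -` W n"
  have Ts: "T \<in> sets lborel" unfolding T_def using measurable_sets[of "(+) (- y n)" lborel borel "W n"] Ws by simp
  have "emeasure lborel T = emeasure (distr lborel borel ((+) (- y n))) (W n)"
    unfolding T_def using Ws by (subst emeasure_distr) auto
  also have "\<dots> = emeasure lborel (W n)" by (simp add: lborel_distr_plus)
  finally have mT: "emeasure lborel T = emeasure lborel (W n)" .
  have "V n \<inter> T \<noteq> {}"
  proof
    assume disj: "V n \<inter> T = {}"
    have sub: "V n \<union> T \<subseteq> {0..3}" unfolding V_def T_def W_def using xy(2)[of n] by auto
    have "emeasure lborel (V n \<union> T) = emeasure lborel (V n) + emeasure lborel T"
      using disj Vs Ts by (intro plus_emeasure[symmetric]) auto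
    also have "\<dots> > ennreal (3/2) + ennreal (3/2)"
      using n mT by (metis add_strict_mono)
    also have "ennreal (3/2) + ennreal (3/2) = 3"
      by (simp flip: ennreal_plus)
    finally have "3 < emeasure lborel (V n \<union> T)" .
    moreover have "emeasure lborel (V n \<union> T) \<le> emeasure lborel {0..3::real}"
      using sub by (intro emeasure_mono) auto
    ultimately show False by simp
  qed
  then obtain v where v: "v \<in> V n" "v \<in> T" by auto
  have 1: "\<bar>h (x n + v) - h (x n)\<bar> < e/2" using v(1) unfolding V_def by auto
  have 2: "\<bar>h ((x n + y n) + (v - y n)) - h (x n + y n)\<bar> < e/2"
    using v(2) unfolding T_def W_def by auto
  have "\<bar>h (x n + y n) - h (x n)\<bar> < e" using 1 2 by simp (smt (verit))
  with xy(3)[of n] show False by simp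
qed

lemma sv_h:
  assumes sv: "slowly_varying L"
  shows "(\<lambda>u. ln (L (exp u))) \<in> borel_measurable borel"
    and "((\<lambda>u. ln (L (exp (u+v))) - ln (L (exp u))) \<longlongrightarrow> 0) at_top"
proof -
  have Lm[measurable]: "L \<in> borel_measurable borel" and Lp: "\<And>x. x > 0 \<Longrightarrow> L x > 0"
    and Ll: "\<And>t. t > 0 \<Longrightarrow> ((\<lambda>x. L (t * x) / L x) \<longlongrightarrow> 1) at_top"
    using sv unfolding slowly_varying_def by auto
  show "(\<lambda>u. ln (L (exp u))) \<in> borel_measurable borel" by measurable
  have "((\<lambda>u. L (exp v * exp u) / L (exp u)) \<longlongrightarrow> 1) at_top"
    using filterlim_compose[OF Ll[of "exp v"] exp_at_top] by simp
  then have "((\<lambda>u. ln (L (exp v * exp u) / L (exp u))) \<longlongrightarrow> ln 1) at_top"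
    by (rule tendsto_ln) simp
  moreover have "ln (L (exp v * exp u) / L (exp u)) = ln (L (exp (u+v))) - ln (L (exp u))" for u
    using Lp[of "exp u"] Lp[of "exp v * exp u"] by (simp add: ln_div exp_add mult.commute)
  ultimately show "((\<lambda>u. ln (L (exp (u+v))) - ln (L (exp u))) \<longlongrightarrow> 0) at_top" by simp
qed

lemma sv_unif:
  assumes sv: "slowly_varying L" and e: "e > 0"
  shows "\<exists>U. \<forall>u\<ge>U. \<forall>v\<in>{0..1}. \<bar>ln (L (exp (u+v))) - ln (L (exp u))\<bar> < e"
  using uct[of "\<lambda>u. ln (L (exp u))", OF sv_h(1)[OF sv] sv_h(2)[OF sv] e] by simp

lemma sv_ratio:
  assumes sv: "slowly_varying L"
  shows "(\<lambda>k. L (real (Suc k)) / L (real k)) \<longlonglongrightarrow> 1"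
proof -
  have Lp: "\<And>x. x > 0 \<Longrightarrow> L x > 0" using sv unfolding slowly_varying_def by auto
  have "(\<lambda>k. ln (L (real (Suc k))) - ln (L (real k))) \<longlonglongrightarrow> 0"
  proof (rule LIMSEQ_I)
    fix r :: real assume r: "r > 0"
    obtain U where U: "\<forall>u\<ge>U. \<forall>v\<in>{0..1}. \<bar>ln (L (exp (u+v))) - ln (L (exp u))\<bar> < r"
      using sv_unif[OF sv r] by blast
    obtain N :: nat where N: "N \<ge> 1" "real N \<ge> exp U"
      by (meson le_cases order.trans real_arch_simple real_of_nat_ge_one_iff)
    show "\<exists>no. \<forall>n\<ge>no. norm (ln (L (real (Suc n))) - ln (L (real n)) - 0) < r"
    proof (intro exI allI impI)
      fix n assume n: "N \<le> n"
      have npos: "real n > 0" using n N by simp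
      have u: "ln (real n) \<ge> U" using n N npos
        by (metis exp_le_cancel_iff exp_ln order.trans of_nat_le_iff)
      define v where "v = ln (real (Suc n) / real n)"
      have v0: "v \<ge> 0" unfolding v_def using npos by simp
      have "real (Suc n) / real n \<le> 2" using npos n N by (simp add: field_simps)
      also have "2 \<le> exp (1::real)" using exp_ge_add_one_self[of 1] by simp
      finally have v1: "v \<le> 1" unfolding v_def using npos
        by (metis divide_pos_pos ln_exp ln_le_cancel_iff of_nat_0_less_iff zero_less_Suc exp_gt_zero)
      have "exp (ln (real n) + v) = real (Suc n)" unfolding v_def using npos
        by (simp add: exp_add)
      then show "norm (ln (L (real (Suc n))) - ln (L (real n)) - 0) < r"
        using U u v0 v1 npos by (metis atLeastAtMost_iff exp_ln real_norm_def diff_zero)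
    qed
  qed
  then have "(\<lambda>k. exp (ln (L (real (Suc k))) - ln (L (real k)))) \<longlonglongrightarrow> exp 0"
    by (rule tendsto_exp)
  moreover have "eventually (\<lambda>k. exp (ln (L (real (Suc k))) - ln (L (real k))) = L (real (Suc k)) / L (real k)) sequentially"
    using eventually_gt_at_top[of 0]
    by eventually_elim (use Lp in \<open>simp add: exp_diff\<close>)
  ultimately show ?thesis by (simp add: tendsto_cong)
qed

lemma sv_poly:
  assumes sv: "slowly_varying L" and d: "\<delta> > 0"
  shows "\<exists>B X. X > 0 \<and> (\<forall>x\<ge>X. L x \<le> B * x powr \<delta>)"
proof -
  define h where "h u = ln (L (exp u))" for u
  have Lp: "\<And>x. x > 0 \<Longrightarrow> L x > 0" using sv unfolding slowly_varying_def by auto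
  obtain U where U: "\<forall>u\<ge>U. \<forall>v\<in>{0..1}. \<bar>h (u+v) - h u\<bar> < \<delta>"
    using sv_unif[OF sv d] unfolding h_def by blast
  have ind: "\<forall>u. U \<le> u \<longrightarrow> u \<le> U + real n \<longrightarrow> h u \<le> h U + \<delta> * real n" for n
  proof (induction n)
    case 0 then show ?case by auto
  next
    case (Suc n)
    show ?case
    proof (intro allI impI)
      fix u assume u: "U \<le> u" "u \<le> U + real (Suc n)"
      show "h u \<le> h U + \<delta> * real (Suc n)"
      proof (cases "u \<le> U + real n")
        case True then show ?thesis using Suc u d by (smt (verit) mult_left_mono of_nat_Suc)
      next
        case False
        have "\<bar>h ((U + real n) + (u - (U + real n))) - h (U + real n)\<bar> < \<delta>"
          using U[rule_format, of "U + real n" "u - (U + real n)"] False u by auto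
        moreover have "h (U + real n) \<le> h U + \<delta> * real n" using Suc by auto
        ultimately show ?thesis by (simp add: algebra_simps)
      qed
    qed
  qed
  have hb: "h u \<le> h U + \<delta> * (u - U + 1)" if "u \<ge> U" for u
  proof -
    define n where "n = nat \<lceil>u - U\<rceil>"
    have "u \<le> U + real n" "real n \<le> u - U + 1" unfolding n_def using that by linarith+
    then show ?thesis using ind[of n] that d by (smt (verit) mult_left_mono)
  qed
  show ?thesis
  proof (intro exI conjI allI impI)
    show "exp U > 0" by simp
    fix x assume x: "exp U \<le> x"
    have xp: "x > 0" using x by (smt (verit) exp_gt_zero)
    have "L x = exp (h (ln x))" unfolding h_def using xp Lp[OF xp] by simp
    also have "\<dots> \<le> exp (h U + \<delta> * (ln x - U + 1))"
      using hb[of "ln x"] x xp by (simp add: ln_ge_iff)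
    also have "\<dots> = exp (h U + \<delta> * (1 - U)) * x powr \<delta>"
      using xp by (simp add: powr_def exp_add[symmetric] algebra_simps)
    finally show "L x \<le> exp (h U + \<delta> * (1 - U)) * x powr \<delta>" .
  qed
qed

lemma sv_seq_ratio:
  fixes cb :: "nat \<Rightarrow> real"
  assumes sv: "slowly_varying L" and pos: "\<forall>k. cb k > 0"
    and eq: "cb \<sim>[sequentially] (\<lambda>k. L (real k) * real k powr a)"
  shows "(\<lambda>k. cb (Suc k) / cb k) \<longlonglongrightarrow> 1"
proof -
  define g where "g k = L (real k) * real k powr a" for k
  have Lp: "\<And>x. x > 0 \<Longrightarrow> L x > 0" using sv unfolding slowly_varying_def by auto
  have gp: "g k > 0" if "k > 0" for k unfolding g_def using Lp[of "real k"] that by simp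
  have q: "(\<lambda>k. cb k / g k) \<longlonglongrightarrow> 1"
    using asymp_equivD[OF eq] pos unfolding g_def by (simp add: less_imp_neq[symmetric])
  have q1: "(\<lambda>k. cb (Suc k) / g (Suc k)) \<longlonglongrightarrow> 1" using q by (rule LIMSEQ_Suc)
  have q2: "(\<lambda>k. g k / cb k) \<longlonglongrightarrow> 1" using tendsto_inverse[OF q] by (simp add: inverse_eq_divide)
  have "(\<lambda>k. 1 + 1 / real k) \<longlonglongrightarrow> 1 + 0"
    by (intro tendsto_add tendsto_const lim_const_over_n)
  then have pw: "(\<lambda>k. (1 + 1 / real k) powr a) \<longlonglongrightarrow> 1 powr a"
    by (intro tendsto_powr) simp_all
  have gr: "(\<lambda>k. L (real (Suc k)) / L (real k) * (1 + 1 / real k) powr a) \<longlonglongrightarrow> 1 * 1"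
    using tendsto_mult[OF sv_ratio[OF sv] pw] by simp
  have "(\<lambda>k. cb (Suc k) / g (Suc k) * (L (real (Suc k)) / L (real k) * (1 + 1 / real k) powr a) * (g k / cb k)) \<longlonglongrightarrow> 1 * (1 * 1) * 1"
    by (intro tendsto_mult q1 gr q2)
  moreover have "eventually (\<lambda>k. cb (Suc k) / g (Suc k) * (L (real (Suc k)) / L (real k) * (1 + 1 / real k) powr a) * (g k / cb k) = cb (Suc k) / cb k) sequentially"
    using eventually_gt_at_top[of 0]
  proof eventually_elim
    case (elim k)
    have kp: "real k > 0" using elim by simp
    have "(1 + 1 / real k) powr a = real (Suc k) powr a / real k powr a"
      using kp by (simp add: powr_divide[symmetric] field_simps)
    then show ?case using gp[of k] gp[of "Suc k"] elim pos Lp[OF kp] kp Lp[of "1 + real k"]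
      unfolding g_def by (simp add: field_simps)
  qed
  ultimately show ?thesis by (simp add: tendsto_cong)
qed

lemma ereal_between_finite:
  fixes x :: ereal
  assumes "ereal a \<le> x" "x \<le> ereal b"
  shows "\<exists>S. x = ereal S \<and> a \<le> S \<and> S \<le> b"
  using assms by (cases x) auto

lemma limsup_rec:
  fixes D r e :: "nat \<Rightarrow> real" and \<psi> :: "real \<Rightarrow> real"
  assumes D0: "\<forall>k. 0 \<le> D k" and DB: "\<forall>k. D k \<le> B"
    and r: "r \<longlonglongrightarrow> \<alpha>" and rpos: "\<forall>k. 0 \<le> r k" and e: "e \<longlonglongrightarrow> 0"
    and step: "\<forall>k. D (Suc k) \<le> r k * (\<psi> (D k) + e k)"
    and mono: "\<forall>x y. 0 \<le> x \<longrightarrow> x \<le> y \<longrightarrow> \<psi> x \<le> \<psi> y"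
    and lip: "\<forall>x y. 0 \<le> x \<longrightarrow> x \<le> y \<longrightarrow> \<psi> y - \<psi> x \<le> \<Lambda> * (y - x)"
    and L0: "\<Lambda> \<ge> 0"
  shows "\<exists>S. 0 \<le> S \<and> limsup (\<lambda>k. ereal (D k)) = ereal S \<and> S \<le> \<alpha> * \<psi> S"
proof -
  have a0: "\<alpha> \<ge> 0" using r rpos by (auto intro: LIMSEQ_le_const)
  have "limsup (\<lambda>k. ereal (D k)) \<le> ereal B" using DB by (intro Limsup_bounded) auto
  moreover have "ereal 0 \<le> limsup (\<lambda>k. ereal (D k))" using D0 by (intro le_Limsup) auto
  ultimately obtain S where S: "limsup (\<lambda>k. ereal (D k)) = ereal S" "0 \<le> S"
    using ereal_between_finite by blast
  have key: "S \<le> \<alpha> * \<psi> (S + \<delta>)" if d: "\<delta> > 0" for \<delta>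
  proof -
    have "eventually (\<lambda>k. ereal (D k) < ereal (S + \<delta>)) sequentially"
      using S d by (intro Limsup_lessD) auto
    then have ev: "eventually (\<lambda>k. ereal (D (Suc k)) \<le> ereal (r k * (\<psi> (S + \<delta>) + e k))) sequentially"
    proof eventually_elim
      case (elim k)
      have "\<psi> (D k) \<le> \<psi> (S + \<delta>)" using mono D0 elim by auto
      then have "r k * (\<psi> (D k) + e k) \<le> r k * (\<psi> (S + \<delta>) + e k)"
        using rpos by (intro mult_left_mono) auto
      then show ?case using step[rule_format, of k] by simp
    qed
    have lim: "(\<lambda>k. ereal (r k * (\<psi> (S + \<delta>) + e k))) \<longlonglongrightarrow> ereal (\<alpha> * (\<psi> (S + \<delta>) + 0))"
      unfolding lim_ereal by (intro tendsto_mult tendsto_add r e tendsto_const)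
    have "limsup (\<lambda>k. ereal (D (Suc k))) \<le> ereal (\<alpha> * (\<psi> (S + \<delta>) + 0))"
      using Limsup_mono[OF ev] lim_imp_Limsup[OF _ lim] by simp
    moreover have "limsup (\<lambda>k. ereal (D (Suc k))) = limsup (\<lambda>k. ereal (D k))"
      using limsup_shift[of "\<lambda>k. ereal (D k)"] by simp
    ultimately show ?thesis using S by simp
  qed
  have "S \<le> \<alpha> * \<psi> S"
  proof (rule field_le_epsilon)
    fix \<epsilon> :: real assume \<epsilon>: "\<epsilon> > 0"
    define \<delta> where "\<delta> = \<epsilon> / (\<alpha> * \<Lambda> + 1)"
    have "\<alpha> * \<Lambda> \<ge> 0" using a0 L0 by simp
    then have dpos: "\<delta> > 0" unfolding \<delta>_def using \<epsilon> by (intro divide_pos_pos) auto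
    have "\<psi> (S + \<delta>) \<le> \<psi> S + \<Lambda> * \<delta>" using lip S dpos by (smt (verit))
    then have "\<alpha> * \<psi> (S + \<delta>) \<le> \<alpha> * \<psi> S + \<alpha> * \<Lambda> * \<delta>"
      using a0 by (smt (verit) mult_left_mono distrib_left mult.assoc)
    moreover have "\<alpha> * \<Lambda> * \<delta> \<le> \<epsilon>"
    proof -
      define p where "p = \<alpha> * \<Lambda>"
      have p0: "p \<ge> 0" unfolding p_def using a0 L0 by simp
      have "\<alpha> * \<Lambda> * \<delta> = \<epsilon> * (p / (p + 1))" unfolding \<delta>_def p_def by simp
      also have "\<dots> \<le> \<epsilon> * 1" using p0 \<epsilon> by (intro mult_left_mono) auto
      finally show ?thesis by simp
    qed
    ultimately show "S \<le> \<alpha> * \<psi> S + \<epsilon>" using key[OF dpos] by linarith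
  qed
  then show ?thesis using S by blast
qed

lemma liminf_rec:
  fixes D r e :: "nat \<Rightarrow> real" and \<psi> :: "real \<Rightarrow> real"
  assumes D0: "\<forall>k. 0 \<le> D k" and DB: "\<forall>k. D k \<le> B"
    and r: "r \<longlonglongrightarrow> \<alpha>" and rpos: "\<forall>k. 0 \<le> r k" and e: "e \<longlonglongrightarrow> 0"
    and step: "\<forall>k. r k * (\<psi> (D k) + e k) \<le> D (Suc k)"
    and mono: "\<forall>x y. 0 \<le> x \<longrightarrow> x \<le> y \<longrightarrow> \<psi> x \<le> \<psi> y"
    and lip: "\<forall>x y. 0 \<le> x \<longrightarrow> x \<le> y \<longrightarrow> \<psi> y - \<psi> x \<le> \<Lambda> * (y - x)"
    and L0: "\<Lambda> \<ge> 0"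
  shows "\<exists>I. 0 \<le> I \<and> liminf (\<lambda>k. ereal (D k)) = ereal I \<and> \<alpha> * \<psi> I \<le> I"
proof -
  have a0: "\<alpha> \<ge> 0" using r rpos by (auto intro: LIMSEQ_le_const)
  have "liminf (\<lambda>k. ereal (D k)) \<le> ereal B" using DB by (intro Liminf_le) auto
  moreover have "ereal 0 \<le> liminf (\<lambda>k. ereal (D k))" using D0 by (intro Liminf_bounded) auto
  ultimately obtain I where I: "liminf (\<lambda>k. ereal (D k)) = ereal I" "0 \<le> I"
    using ereal_between_finite by blast
  have key: "\<alpha> * (\<psi> I - \<Lambda> * \<delta>) \<le> I" if d: "\<delta> > 0" for \<delta>
  proof -
    have "eventually (\<lambda>k. ereal (I - \<delta>) < ereal (D k)) sequentially"
      using I d by (intro less_LiminfD) auto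
    then have ev: "eventually (\<lambda>k. ereal (r k * ((\<psi> I - \<Lambda> * \<delta>) + e k)) \<le> ereal (D (Suc k))) sequentially"
    proof eventually_elim
      case (elim k)
      define m where "m = max 0 (I - \<delta>)"
      have "\<psi> m \<le> \<psi> (D k)" using mono D0 elim unfolding m_def by auto
      moreover have "\<psi> I - \<psi> m \<le> \<Lambda> * (I - m)" using lip[rule_format, of m I] I d unfolding m_def by auto
      moreover have "\<Lambda> * (I - m) \<le> \<Lambda> * \<delta>" using L0 unfolding m_def
        by (intro mult_left_mono) auto
      ultimately have "\<psi> I - \<Lambda> * \<delta> \<le> \<psi> (D k)" by linarith
      then have "r k * ((\<psi> I - \<Lambda> * \<delta>) + e k) \<le> r k * (\<psi> (D k) + e k)"
        using rpos by (intro mult_left_mono) auto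
      then show ?case using step[rule_format, of k] by simp
    qed
    have lim: "(\<lambda>k. ereal (r k * ((\<psi> I - \<Lambda> * \<delta>) + e k))) \<longlonglongrightarrow> ereal (\<alpha> * ((\<psi> I - \<Lambda> * \<delta>) + 0))"
      unfolding lim_ereal by (intro tendsto_mult tendsto_add r e tendsto_const)
    have "ereal (\<alpha> * ((\<psi> I - \<Lambda> * \<delta>) + 0)) \<le> liminf (\<lambda>k. ereal (D (Suc k)))"
      using Liminf_mono[OF ev] lim_imp_Liminf[OF _ lim] by simp
    moreover have "liminf (\<lambda>k. ereal (D (Suc k))) = liminf (\<lambda>k. ereal (D k))"
      using liminf_shift[of "\<lambda>k. ereal (D k)"] by simp
    ultimately show ?thesis using I by simp
  qed
  have "\<alpha> * \<psi> I \<le> I"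
  proof (rule field_le_epsilon)
    fix \<epsilon> :: real assume \<epsilon>: "\<epsilon> > 0"
    define \<delta> where "\<delta> = \<epsilon> / (\<alpha> * \<Lambda> + 1)"
    have "\<alpha> * \<Lambda> \<ge> 0" using a0 L0 by simp
    then have dpos: "\<delta> > 0" unfolding \<delta>_def using \<epsilon> by (intro divide_pos_pos) auto
    have "\<alpha> * \<Lambda> * \<delta> \<le> \<epsilon>"
    proof -
      define p where "p = \<alpha> * \<Lambda>"
      have p0: "p \<ge> 0" unfolding p_def using a0 L0 by simp
      have "\<alpha> * \<Lambda> * \<delta> = \<epsilon> * (p / (p + 1))" unfolding \<delta>_def p_def by simp
      also have "\<dots> \<le> \<epsilon> * 1" using p0 \<epsilon> by (intro mult_left_mono) auto
      finally show ?thesis by simp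
    qed
    then show "\<alpha> * \<psi> I \<le> I + \<epsilon>" using key[OF dpos] by (simp add: algebra_simps)
  qed
  then show ?thesis using I by blast
qed

lemma ratio_to_infty:
  fixes q :: "nat \<Rightarrow> real"
  assumes pos: "\<forall>k. q k > 0" and r: "(\<lambda>k. q (Suc k) / q k) \<longlonglongrightarrow> \<beta>" and b: "\<beta> > 1"
  shows "filterlim q at_top sequentially"
proof -
  define \<theta> where "\<theta> = (1 + \<beta>) / 2"
  have th: "1 < \<theta>" "\<theta> < \<beta>" unfolding \<theta>_def using b by auto
  obtain N where N: "\<forall>k\<ge>N. q (Suc k) / q k > \<theta>"
    using order_tendstoD(1)[OF r th(2)] by (auto simp: eventually_sequentially)
  have grow: "q (N + n) \<ge> \<theta> ^ n * q N" for n
  proof (induction n)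
    case 0 then show ?case by simp
  next
    case (Suc n)
    have "q (Suc (N + n)) > \<theta> * q (N + n)" using N[rule_format, of "N+n"] pos
      by (simp add: field_simps)
    moreover have "\<theta> * q (N + n) \<ge> \<theta> * (\<theta> ^ n * q N)" using Suc th by (intro mult_left_mono) auto
    ultimately show ?case by simp
  qed
  show ?thesis unfolding filterlim_at_top
  proof
    fix Z :: real
    obtain n0 where n0: "Z / q N < \<theta> ^ n0" using real_arch_pow[OF th(1)] by blast
    show "eventually (\<lambda>k. Z \<le> q k) sequentially"
      unfolding eventually_sequentially
    proof (intro exI allI impI)
      fix k assume k: "N + n0 \<le> k"
      define n where "n = k - N"
      have n: "k = N + n" "n0 \<le> n" using k unfolding n_def by auto
      have "Z < \<theta> ^ n0 * q N" using n0 pos by (simp add: field_simps)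
      also have "\<dots> \<le> \<theta> ^ n * q N" using pos[rule_format, of N] th n by (intro mult_right_mono power_increasing) auto
      also have "\<dots> \<le> q k" using grow n by simp
      finally show "Z \<le> q k" by simp
    qed
  qed
qed

lemma bounded_rec:
  fixes x a :: "nat \<Rightarrow> real"
  assumes x0: "\<forall>k. 0 \<le> x k" and step: "\<forall>k. x (Suc k) \<le> a k * x k + b"
    and a: "a \<longlonglongrightarrow> \<alpha>" and a1: "\<alpha> < 1" and b: "b \<ge> 0" and a0: "\<alpha> \<ge> 0"
  shows "\<exists>B. \<forall>k. x k \<le> B"
proof -
  define \<theta> where "\<theta> = (1 + \<alpha>) / 2"
  have th: "\<alpha> < \<theta>" "\<theta> < 1" unfolding \<theta>_def using a1 by auto
  obtain N where N: "\<forall>k\<ge>N. a k < \<theta>"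
    using order_tendstoD(2)[OF a th(1)] by (auto simp: eventually_sequentially)
  define Mx where "Mx = max (x N) (b / (1 - \<theta>))"
  have "b / (1 - \<theta>) \<le> Mx" unfolding Mx_def by simp
  then have "(1 - \<theta>) * (b / (1 - \<theta>)) \<le> (1 - \<theta>) * Mx" using th by (intro mult_left_mono) auto
  then have Mxb: "b \<le> (1 - \<theta>) * Mx" using th by simp
  have ind: "x (N + n) \<le> Mx" for n
  proof (induction n)
    case 0 then show ?case unfolding Mx_def by simp
  next
    case (Suc n)
    have "a (N+n) * x (N+n) \<le> \<theta> * x (N+n)" using N x0 by (intro mult_right_mono) (auto intro: less_imp_le)
    also have "\<dots> \<le> \<theta> * Mx" using Suc th a0 by (intro mult_left_mono) auto
    finally have "x (Suc (N+n)) \<le> \<theta> * Mx + b" using step[rule_format, of "N+n"] by simp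
    also have "\<dots> \<le> Mx" using Mxb by (simp add: algebra_simps)
    finally show ?case by simp
  qed
  show ?thesis
  proof (intro exI allI)
    fix k
    show "x k \<le> max (Max (x ` {..N})) Mx"
    proof (cases "k \<le> N")
      case True then show ?thesis by (simp add: le_max_iff_disj)
    next
      case False
      then have "k = N + (k - N)" by simp
      then show ?thesis using ind[of "k - N"] by (metis le_max_iff_disj)
    qed
  qed
qed

lemma growth_rec:
  fixes x a :: "nat \<Rightarrow> real"
  assumes x0: "\<forall>k. 0 \<le> x k" and step: "\<forall>k. x (Suc k) \<le> a k * x k + 1"
    and a: "a \<longlonglongrightarrow> \<alpha>" and th: "\<alpha> < \<theta>" "1 < \<theta>"
  shows "\<exists>B. \<forall>k. x k \<le> B * \<theta> ^ k"
proof -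
  obtain N where N: "\<forall>k\<ge>N. a k < \<theta>"
    using order_tendstoD(2)[OF a th(1)] by (auto simp: eventually_sequentially)
  define c0 where "c0 = 1 / (\<theta> - 1)"
  have c0: "c0 > 0" "\<theta> * c0 = c0 + 1" unfolding c0_def using th by (auto simp: field_simps)
  have ind: "x (N + n) + c0 \<le> \<theta> ^ n * (x N + c0)" for n
  proof (induction n)
    case 0 then show ?case by simp
  next
    case (Suc n)
    have "a (N+n) * x (N+n) \<le> \<theta> * x (N+n)" using N x0 by (intro mult_right_mono) (auto intro: less_imp_le)
    then have "x (Suc (N+n)) + c0 \<le> \<theta> * (x (N+n) + c0)"
      using step[rule_format, of "N+n"] c0 by (simp add: algebra_simps)
    also have "\<dots> \<le> \<theta> * (\<theta> ^ n * (x N + c0))" using Suc th by (intro mult_left_mono) auto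
    finally show ?case by simp
  qed
  define Mx where "Mx = Max (x ` {..N})"
  have Mx0: "Mx \<ge> 0" unfolding Mx_def using x0 by (meson Max_ge atMost_iff finite_atMost finite_imageI image_eqI order.trans order_refl)
  show ?thesis
  proof (intro exI allI)
    fix k
    have t1: "1 \<le> \<theta> ^ k" using th by simp
    show "x k \<le> (Mx + (x N + c0)) * \<theta> ^ k"
    proof (cases "k \<le> N")
      case True
      then have "x k \<le> Mx" unfolding Mx_def by simp
      also have "\<dots> \<le> Mx * \<theta> ^ k" using t1 Mx0 by (simp add: mult_le_cancel_left1)
      also have "\<dots> \<le> (Mx + (x N + c0)) * \<theta> ^ k" using x0 c0 th by (intro mult_right_mono) (auto simp: less_imp_le)
      finally show ?thesis .
    next
      case False
      then have k: "k = N + (k - N)" by simp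
      have "x k \<le> \<theta> ^ (k - N) * (x N + c0)" using ind[of "k - N"] k c0 by simp
      also have "\<dots> \<le> \<theta> ^ k * (x N + c0)" using th x0 c0
        by (intro mult_right_mono power_increasing) (auto simp: less_imp_le add_nonneg_nonneg)
      also have "\<dots> \<le> (Mx + (x N + c0)) * \<theta> ^ k" using Mx0 th by (simp add: algebra_simps)
      finally show ?thesis .
    qed
  qed
qed

lemma stolz_zero:
  fixes t \<sigma> :: "nat \<Rightarrow> real"
  assumes t0: "\<forall>k. 0 \<le> t k" and inc: "\<forall>k. \<sigma> k < \<sigma> (Suc k)"
    and sig: "filterlim \<sigma> at_top sequentially"
    and q: "(\<lambda>k. t k / (\<sigma> (Suc k) - \<sigma> k)) \<longlonglongrightarrow> 0"
  shows "(\<lambda>k. (\<Sum>l<k. t l) / \<sigma> k) \<longlonglongrightarrow> 0"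
proof (rule LIMSEQ_I)
  fix r :: real assume r: "r > 0"
  define \<epsilon> where "\<epsilon> = r / 2"
  have e: "\<epsilon> > 0" unfolding \<epsilon>_def using r by simp
  obtain N where N: "\<forall>k\<ge>N. t k / (\<sigma> (Suc k) - \<sigma> k) < \<epsilon>"
    using order_tendstoD(2)[OF q e] by (auto simp: eventually_sequentially)
  have tN: "t k \<le> \<epsilon> * (\<sigma> (Suc k) - \<sigma> k)" if "k \<ge> N" for k
    using N[rule_format, OF that] inc[rule_format, of k] by (simp add: divide_less_eq less_imp_le)
  define A where "A = (\<Sum>l<N. t l) + \<epsilon> * \<bar>\<sigma> N\<bar>"
  have A0: "A \<ge> 0" unfolding A_def using t0 e by (simp add: sum_nonneg)
  have Tb: "(\<Sum>l<N+n. t l) \<le> (\<Sum>l<N. t l) + \<epsilon> * (\<sigma> (N+n) - \<sigma> N)" for n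
  proof (induction n)
    case 0 then show ?case by simp
  next
    case (Suc n)
    then show ?case using tN[of "N+n"] by (simp add: algebra_simps)
  qed
  have ev: "eventually (\<lambda>k. \<sigma> k > max 1 (A / \<epsilon>)) sequentially"
    using sig unfolding filterlim_at_top_dense by (metis max_less_iff_conj)
  then obtain N2 where N2: "\<forall>k\<ge>N2. \<sigma> k > max 1 (A / \<epsilon>)" by (auto simp: eventually_sequentially)
  show "\<exists>no. \<forall>n\<ge>no. norm ((\<Sum>l<n. t l) / \<sigma> n - 0) < r"
  proof (intro exI allI impI)
    fix k assume k: "max N N2 \<le> k"
    have sk: "\<sigma> k > 1" "\<sigma> k > A / \<epsilon>" using N2 k by auto
    have kN: "N \<le> k" using k by simp
    have "(\<Sum>l<k. t l) \<le> (\<Sum>l<N. t l) + \<epsilon> * (\<sigma> k - \<sigma> N)"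
      using Tb[of "k - N"] kN by simp
    moreover have "\<epsilon> * (- \<sigma> N) \<le> \<epsilon> * \<bar>\<sigma> N\<bar>" using e by (intro mult_left_mono) auto
    ultimately have "(\<Sum>l<k. t l) \<le> A + \<epsilon> * \<sigma> k"
      unfolding A_def by (simp add: algebra_simps)
    also have "\<dots> < \<epsilon> * \<sigma> k + \<epsilon> * \<sigma> k" using sk e by (simp add: field_simps)
    finally have "(\<Sum>l<k. t l) < r * \<sigma> k" unfolding \<epsilon>_def by simp
    moreover have "(\<Sum>l<k. t l) \<ge> 0" using t0 by (simp add: sum_nonneg)
    ultimately show "norm ((\<Sum>l<k. t l) / \<sigma> k - 0) < r" using sk by (simp add: divide_less_eq)
  qed
qed

lemma scal_ident:
  fixes y x t :: real
  assumes p: "1 + y > 0" "1 + (y + x) > 0" "1 + (y + t*x) > 0"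
  shows "t * ((y + x) / (1 + (y + x))) - ((y + t*x) / (1 + (y + t*x)) + (t - 1) * (y / (1 + y)))
      = t * (t - 1) * x^2 / ((1 + y) * (1 + (y + x)) * (1 + (y + t*x)))"
proof -
  define A where "A = 1 + y"
  define B where "B = 1 + (y + x)"
  define Cc where "Cc = 1 + (y + t*x)"
  have n: "A \<noteq> 0" "B \<noteq> 0" "Cc \<noteq> 0" using p unfolding A_def B_def Cc_def by auto
  have g: "z / (1 + z) = 1 - 1 / (1 + z)" if "1 + z \<noteq> 0" for z :: real
    using that by (simp add: field_simps)
  have "t * ((y + x) / (1 + (y + x))) - ((y + t*x) / (1 + (y + t*x)) + (t - 1) * (y / (1 + y)))
     = t * (1 - 1 / B) - ((1 - 1 / Cc) + (t - 1) * (1 - 1 / A))"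
    using g[of "y + x"] g[of "y + t*x"] g[of y] n unfolding A_def B_def Cc_def by simp
  also have "\<dots> = (- (t * A * Cc) + A * B + (t - 1) * B * Cc) / (A * B * Cc)"
    using n by (simp add: field_simps)
  also have "- (t * A * Cc) + A * B + (t - 1) * B * Cc = t * (t - 1) * x^2"
    unfolding A_def B_def Cc_def by (simp add: algebra_simps power2_eq_square)
  finally show ?thesis unfolding A_def B_def Cc_def .
qed

locale recur =
  fixes M :: "'a measure" and \<rho> :: "'a \<Rightarrow> real" and C U d :: "nat \<Rightarrow> real"
  assumes ps: "prob_space M"
    and rm: "\<rho> \<in> borel_measurable M"
    and rp: "\<forall>x\<in>space M. \<rho> x > 0"
    and ri: "integrable M \<rho>" and rE: "(\<integral>x. \<rho> x \<partial>M) = 1"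
    and Cp: "\<forall>k. C k > 0" and Up: "\<forall>k. U k > 0" and d0: "d 0 \<ge> 0"
    and drec: "\<forall>k. d (Suc k) = (\<integral>x. C k * (U k * \<rho> x + d k) / (C k + (U k * \<rho> x + d k)) \<partial>M)"
begin

sublocale prob_space M by (rule ps)

lemmas rm' [measurable] = rm

lemma rpx: "x \<in> space M \<Longrightarrow> \<rho> x > 0" using rp by auto

lemma qrho: "q \<ge> 0 \<Longrightarrow> x \<in> space M \<Longrightarrow> q * \<rho> x \<ge> 0"
  using rpx[of x] by simp

lemma int_pos:
  fixes f :: "'a \<Rightarrow> real"
  assumes "integrable M f" "\<forall>x\<in>space M. f x > 0"
  shows "(\<integral>x. f x \<partial>M) > 0"
proof -
  have ge: "(\<integral>x. f x \<partial>M) \<ge> 0" using assms by (intro Bochner_Integration.integral_nonneg_AE AE_I2) (auto intro: less_imp_le)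
  have "(\<integral>x. f x \<partial>M) \<noteq> 0"
  proof
    assume "(\<integral>x. f x \<partial>M) = 0"
    then have "AE x in M. f x = 0"
      using integral_nonneg_eq_0_iff_AE[OF assms(1)] assms(2) by (auto intro: less_imp_le)
    then have "AE x in M. False" by (rule AE_mp) (use assms(2) in \<open>auto intro!: AE_I2\<close>)
    then show False by (simp add: AE_False emeasure_space_1)
  qed
  then show ?thesis using ge by simp
qed

lemma int_bound:
  fixes f :: "'a \<Rightarrow> real"
  assumes "f \<in> borel_measurable M" "\<forall>x\<in>space M. \<bar>f x\<bar> \<le> B"
  shows "integrable M f"
  using assms by (intro integrable_const_bound[where B=B]) auto

definition phi :: "real \<Rightarrow> real \<Rightarrow> real" where
  "phi q D = (\<integral>x. (q * \<rho> x + D) / (1 + q * \<rho> x + D) \<partial>M)"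

lemma phi_int:
  assumes "q \<ge> 0" "D \<ge> 0"
  shows "integrable M (\<lambda>x. (q * \<rho> x + D) / (1 + q * \<rho> x + D))"
proof (rule int_bound[where B=1])
  show "(\<lambda>x. (q * \<rho> x + D) / (1 + q * \<rho> x + D)) \<in> borel_measurable M" by measurable
  show "\<forall>x\<in>space M. \<bar>(q * \<rho> x + D) / (1 + q * \<rho> x + D)\<bar> \<le> 1"
  proof
    fix x assume "x \<in> space M"
    then have "q * \<rho> x \<ge> 0" using qrho assms by simp
    then show "\<bar>(q * \<rho> x + D) / (1 + q * \<rho> x + D)\<bar> \<le> 1" using assms by simp
  qed
qed

lemma phi_ge:
  assumes "q \<ge> 0" "D \<ge> 0"
  shows "D / (1 + D) \<le> phi q D"
proof -
  have "(\<integral>x. D / (1 + D) \<partial>M) \<le> phi q D" unfolding phi_def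
  proof (rule integral_mono[OF _ phi_int[OF assms]])
    fix x assume "x \<in> space M"
    then have y: "q * \<rho> x \<ge> 0" using qrho assms by simp
    show "D / (1 + D) \<le> (q * \<rho> x + D) / (1 + q * \<rho> x + D)"
      using y assms by (simp add: divide_simps) (simp add: algebra_simps)
  qed simp
  then show ?thesis by (simp add: prob_space)
qed

lemma phi_lt1:
  assumes "q \<ge> 0" "D \<ge> 0"
  shows "phi q D < 1"
proof -
  have i2: "integrable M (\<lambda>x. 1 / (1 + q * \<rho> x + D))"
  proof (rule int_bound[where B=1])
    show "(\<lambda>x. 1 / (1 + q * \<rho> x + D)) \<in> borel_measurable M" by measurable
    show "\<forall>x\<in>space M. \<bar>1 / (1 + q * \<rho> x + D)\<bar> \<le> 1"
      using qrho assms by (auto simp: divide_simps)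
  qed
  have "(\<integral>x. 1 / (1 + q * \<rho> x + D) \<partial>M) > 0"
    using qrho assms by (intro int_pos[OF i2]) (auto simp: add_pos_nonneg)
  moreover have "phi q D + (\<integral>x. 1 / (1 + q * \<rho> x + D) \<partial>M) = (\<integral>x. (q * \<rho> x + D) / (1 + q * \<rho> x + D) + 1 / (1 + q * \<rho> x + D) \<partial>M)"
    unfolding phi_def using phi_int[OF assms] i2 by simp
  also have "\<dots> = (\<integral>x. 1 \<partial>M)"
  proof (rule Bochner_Integration.integral_cong)
    fix x assume "x \<in> space M"
    then have y: "q * \<rho> x \<ge> 0" using qrho assms by simp
    then show "(q * \<rho> x + D) / (1 + q * \<rho> x + D) + 1 / (1 + q * \<rho> x + D) = 1"
      using assms by (simp add: field_simps)
  qed simp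
  ultimately show ?thesis by (simp add: prob_space)
qed

lemma phi_nonneg:
  assumes "q \<ge> 0" "D \<ge> 0"
  shows "0 \<le> phi q D"
  using phi_ge[OF assms] assms by (smt (verit) divide_nonneg_nonneg)

lemma phi_mono_q:
  assumes "0 \<le> q" "q \<le> q'" "D \<ge> 0"
  shows "phi q D \<le> phi q' D" "phi q' D \<le> phi q D + (q' - q)"
proof -
  have q': "q' \<ge> 0" using assms by simp
  show "phi q D \<le> phi q' D" unfolding phi_def
  proof (rule integral_mono[OF phi_int[OF assms(1,3)] phi_int[OF q' assms(3)]])
    fix x assume "x \<in> space M"
    then have y: "\<rho> x > 0" using rp by simp
    have "q * \<rho> x \<le> q' * \<rho> x" using y assms by (intro mult_right_mono) auto
    moreover have "q * \<rho> x \<ge> 0" using y assms by simp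
    ultimately show "(q * \<rho> x + D) / (1 + q * \<rho> x + D) \<le> (q' * \<rho> x + D) / (1 + q' * \<rho> x + D)"
      using assms by (simp add: divide_simps) (simp add: algebra_simps)
  qed
  have "phi q' D \<le> (\<integral>x. (q * \<rho> x + D) / (1 + q * \<rho> x + D) + (q' - q) * \<rho> x \<partial>M)"
    unfolding phi_def
  proof (rule integral_mono[OF phi_int[OF q' assms(3)]])
    show "integrable M (\<lambda>x. (q * \<rho> x + D) / (1 + q * \<rho> x + D) + (q' - q) * \<rho> x)"
      by (rule Bochner_Integration.integrable_add[OF phi_int[OF assms(1,3)] integrable_mult_right[OF ri]])
    fix x assume "x \<in> space M"
    then have y: "\<rho> x > 0" using rp by simp
    define a where "a = q * \<rho> x"
    define b where "b = q' * \<rho> x"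
    have ab: "0 \<le> a" "a \<le> b" unfolding a_def b_def using y assms by (auto intro: mult_right_mono)
    have "b / (1 + b + D) - a / (1 + a + D) \<le> b - a"
    proof -
      have "b / (1 + b + D) - a / (1 + a + D) = (b - a) * (1 + D) / ((1 + b + D) * (1 + a + D))"
        using ab assms by (simp add: field_simps)
      also have "\<dots> \<le> (b - a) * (1 + D) / (1 + D)"
      proof (rule divide_left_mono)
        have "(1 + D) * 1 \<le> (1 + b + D) * (1 + a + D)" using ab assms by (intro mult_mono) auto
        then show "1 + D \<le> (1 + b + D) * (1 + a + D)" by simp
        show "0 \<le> (b - a) * (1 + D)" using ab assms by simp
        show "0 < (1 + b + D) * (1 + a + D) * (1 + D)" using ab assms by simp
      qed
      also have "\<dots> = b - a" using assms by simp
      finally show ?thesis .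
    qed
    moreover have "(b + D) / (1 + b + D) - (a + D) / (1 + a + D) = b / (1 + b + D) - a / (1 + a + D) + D * (1/(1 + b + D) - 1/(1 + a + D))"
      by (simp add: add_divide_distrib right_diff_distrib)
    moreover have "1/(1 + b + D) \<le> 1/(1 + a + D)" using ab assms by (intro divide_left_mono) auto
    moreover have "D * (1/(1 + b + D) - 1/(1 + a + D)) \<le> 0" using calculation(3) assms
      by (simp add: mult_nonneg_nonpos)
    ultimately have "(b + D) / (1 + b + D) \<le> (a + D) / (1 + a + D) + (b - a)" by linarith
    then show "(q' * \<rho> x + D) / (1 + q' * \<rho> x + D) \<le> (q * \<rho> x + D) / (1 + q * \<rho> x + D) + (q' - q) * \<rho> x"
      unfolding a_def b_def by (simp add: algebra_simps)
  qed
  also have "\<dots> = phi q D + (q' - q)"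
    unfolding phi_def using rE
    by (subst Bochner_Integration.integral_add[OF phi_int[OF assms(1,3)] integrable_mult_right[OF ri]]) simp
  finally show "phi q' D \<le> phi q D + (q' - q)" .
qed

lemma g_step: "0 \<le> (z::real) \<Longrightarrow> z \<le> z' \<Longrightarrow> z' / (1 + z') - z / (1 + z) \<le> z' - z"
proof -
  assume a: "0 \<le> z" "z \<le> z'"
  have "z' / (1 + z') - z / (1 + z) = (z' - z) / ((1 + z') * (1 + z))" using a by (simp add: field_simps)
  also have "\<dots> \<le> (z' - z) / 1"
  proof (rule divide_left_mono)
    have "1 * 1 \<le> (1 + z') * (1 + z)" using a by (intro mult_mono) auto
    then show "1 \<le> (1 + z') * (1 + z)" by simp
  qed (use a in auto)
  finally show ?thesis by simp
qed

lemma g_mono: "0 \<le> (z::real) \<Longrightarrow> z \<le> z' \<Longrightarrow> z / (1 + z) \<le> z' / (1 + z')"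
  by (simp add: divide_simps) (simp add: algebra_simps)

lemma phi_mono_D:
  assumes "0 \<le> q" "0 \<le> D" "D \<le> D'"
  shows "phi q D \<le> phi q D'" "phi q D' \<le> phi q D + (D' - D)"
proof -
  have D': "D' \<ge> 0" using assms by simp
  show "phi q D \<le> phi q D'" unfolding phi_def
  proof (rule integral_mono[OF phi_int[OF assms(1,2)] phi_int[OF assms(1) D']])
    fix x assume x: "x \<in> space M"
    show "(q * \<rho> x + D) / (1 + q * \<rho> x + D) \<le> (q * \<rho> x + D') / (1 + q * \<rho> x + D')"
      using g_mono[of "q * \<rho> x + D" "q * \<rho> x + D'"] qrho[OF assms(1) x] assms by (simp add: add.assoc)
  qed
  have "phi q D' \<le> (\<integral>x. (q * \<rho> x + D) / (1 + q * \<rho> x + D) + (D' - D) \<partial>M)"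
    unfolding phi_def
  proof (rule integral_mono[OF phi_int[OF assms(1) D']])
    show "integrable M (\<lambda>x. (q * \<rho> x + D) / (1 + q * \<rho> x + D) + (D' - D))"
      by (rule Bochner_Integration.integrable_add[OF phi_int[OF assms(1,2)]]) simp
    fix x assume x: "x \<in> space M"
    show "(q * \<rho> x + D') / (1 + q * \<rho> x + D') \<le> (q * \<rho> x + D) / (1 + q * \<rho> x + D) + (D' - D)"
      using g_step[of "q * \<rho> x + D" "q * \<rho> x + D'"] qrho[OF assms(1) x] assms by (simp add: add.assoc)
  qed
  also have "\<dots> = phi q D + (D' - D)"
    unfolding phi_def using phi_int[OF assms(1,2)] by (simp add: prob_space)
  finally show "phi q D' \<le> phi q D + (D' - D)" .
qed

lemma phi_zero: "phi 0 D = D / (1 + D)"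
  unfolding phi_def by (simp add: prob_space)

lemma phi0_pos: assumes "q > 0" shows "phi q 0 > 0"
  unfolding phi_def
proof (rule int_pos)
  show "integrable M (\<lambda>x. (q * \<rho> x + 0) / (1 + q * \<rho> x + 0))" using phi_int[of q 0] assms by simp
  show "\<forall>x\<in>space M. 0 < (q * \<rho> x + 0) / (1 + q * \<rho> x + 0)"
  proof
    fix x assume x: "x \<in> space M"
    have "q * \<rho> x > 0" using rpx[OF x] assms by simp
    then show "0 < (q * \<rho> x + 0) / (1 + q * \<rho> x + 0)" by simp
  qed
qed

lemma scal_alg:
  fixes y x t :: real
  assumes "y \<ge> 0" "x \<ge> 0" "t \<ge> 1"
  shows "(y + t*x) / (1 + (y + t*x)) + (t - 1) * (y / (1 + y)) \<le> t * ((y + x) / (1 + (y + x)))"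
proof -
  have tx: "t * x \<ge> 0" using assms by simp
  have p: "1 + y > 0" "1 + (y + x) > 0" "1 + (y + t*x) > 0" using assms tx by linarith+
  have "t * ((y + x) / (1 + (y + x))) - ((y + t*x) / (1 + (y + t*x)) + (t - 1) * (y / (1 + y)))
      = t * (t - 1) * x^2 / ((1 + y) * (1 + (y + x)) * (1 + (y + t*x)))"
    by (rule scal_ident[OF p])
  also have "\<dots> \<ge> 0" using assms p by simp
  finally show ?thesis by simp
qed

lemma phi_scale:
  assumes "q \<ge> 0" "x \<ge> 0" "t \<ge> 1"
  shows "phi q (t * x) + (t - 1) * phi q 0 \<le> t * phi q x"
proof -
  have tx: "t * x \<ge> 0" using assms by simp
  define F where "F = (\<lambda>y. (q * \<rho> y + t * x) / (1 + q * \<rho> y + t * x))"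
  define G where "G = (\<lambda>y. (q * \<rho> y + 0) / (1 + q * \<rho> y + 0))"
  have iF: "integrable M F" unfolding F_def by (rule phi_int[OF assms(1) tx])
  have iG: "integrable M G" unfolding G_def by (rule phi_int[OF assms(1)]) simp
  have "phi q (t * x) + (t - 1) * phi q 0 = (\<integral>y. F y \<partial>M) + (\<integral>y. (t - 1) * G y \<partial>M)"
    unfolding phi_def F_def G_def by (simp only: integral_mult_right_zero)
  also have "\<dots> = (\<integral>y. F y + (t - 1) * G y \<partial>M)"
    by (rule Bochner_Integration.integral_add[symmetric, OF iF integrable_mult_right[OF iG]])
  also have "\<dots> = (\<integral>y. (q * \<rho> y + t * x) / (1 + q * \<rho> y + t * x) + (t - 1) * ((q * \<rho> y + 0) / (1 + q * \<rho> y + 0)) \<partial>M)"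
    unfolding F_def G_def by (rule refl)
  also have "\<dots> \<le> (\<integral>y. t * ((q * \<rho> y + x) / (1 + q * \<rho> y + x)) \<partial>M)"
  proof (rule integral_mono)
    show "integrable M (\<lambda>y. (q * \<rho> y + t * x) / (1 + q * \<rho> y + t * x) + (t - 1) * ((q * \<rho> y + 0) / (1 + q * \<rho> y + 0)))"
      using Bochner_Integration.integrable_add[OF iF integrable_mult_right[OF iG, of "t - 1"]] unfolding F_def G_def .
    show "integrable M (\<lambda>y. t * ((q * \<rho> y + x) / (1 + q * \<rho> y + x)))"
      using integrable_mult_right[OF phi_int[OF assms(1,2)], of t] .
    fix y assume y: "y \<in> space M"
    show "(q * \<rho> y + t * x) / (1 + q * \<rho> y + t * x) + (t - 1) * ((q * \<rho> y + 0) / (1 + q * \<rho> y + 0))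
         \<le> t * ((q * \<rho> y + x) / (1 + q * \<rho> y + x))"
      using scal_alg[OF qrho[OF assms(1) y] assms(2,3)] by (simp add: add.assoc)
  qed
  also have "\<dots> = t * phi q x" unfolding phi_def by (rule integral_mult_right_zero)
  finally show ?thesis .
qed

lemma phi_infty:
  assumes q0: "\<forall>k. q k \<ge> 0" and q: "filterlim q at_top sequentially"
  shows "(\<lambda>k. phi (q k) 0) \<longlonglongrightarrow> 1"
proof -
  have "(\<lambda>k. (\<integral>x. (q k * \<rho> x + 0) / (1 + q k * \<rho> x + 0) \<partial>M)) \<longlonglongrightarrow> (\<integral>x. 1 \<partial>M)"
  proof (rule integral_dominated_convergence[where w="\<lambda>_. 1"])
    show "(\<lambda>x. 1::real) \<in> borel_measurable M" by simp
    show "\<And>k. (\<lambda>x. (q k * \<rho> x + 0) / (1 + q k * \<rho> x + 0)) \<in> borel_measurable M" by measurable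
    show "integrable M (\<lambda>x. 1::real)" by simp
    show "AE x in M. (\<lambda>k. (q k * \<rho> x + 0) / (1 + q k * \<rho> x + 0)) \<longlonglongrightarrow> 1"
    proof (rule AE_I2)
      fix x assume x: "x \<in> space M"
      have lim: "filterlim (\<lambda>k. 1 + q k * \<rho> x) at_top sequentially"
        by (rule filterlim_tendsto_add_at_top[OF tendsto_const])
           (rule filterlim_at_top_mult_tendsto_pos[OF tendsto_const rpx[OF x] q])
      have "(\<lambda>k. 1 - inverse (1 + q k * \<rho> x)) \<longlonglongrightarrow> 1 - 0"
        by (intro tendsto_diff tendsto_const tendsto_inverse_0_at_top[OF lim])
      moreover have "1 - inverse (1 + q k * \<rho> x) = (q k * \<rho> x + 0) / (1 + q k * \<rho> x + 0)" for k
        using qrho[OF _ x, of "q k"] q0 by (simp add: field_simps)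
      ultimately show "(\<lambda>k. (q k * \<rho> x + 0) / (1 + q k * \<rho> x + 0)) \<longlonglongrightarrow> 1" by simp
    qed
    show "AE x in M. norm ((q k * \<rho> x + 0) / (1 + q k * \<rho> x + 0)) \<le> 1" for k
    proof (rule AE_I2)
      fix x assume x: "x \<in> space M"
      have "q k * \<rho> x \<ge> 0" using qrho[OF _ x] q0 by simp
      then show "norm ((q k * \<rho> x + 0) / (1 + q k * \<rho> x + 0)) \<le> 1" by simp
    qed
  qed
  then show ?thesis unfolding phi_def by (simp add: prob_space)
qed

lemma frac_resc:
  fixes Cv z :: real assumes "Cv > 0" "z \<ge> 0"
  shows "Cv * ((z / Cv) / (1 + z / Cv)) = Cv * z / (Cv + z)"
proof -
  have "1 + z / Cv = (Cv + z) / Cv" using assms by (simp add: field_simps)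
  then show ?thesis using assms by simp
qed

lemma frac_resc2:
  fixes Cv Uv z :: real assumes "Cv > 0" "Uv > 0" "z \<ge> 0"
  shows "Uv * ((z / Uv) / (1 + Uv / Cv * (z / Uv))) = Cv * z / (Cv + z)"
proof -
  have "Uv / Cv * (z / Uv) = z / Cv" using assms by simp
  moreover have "1 + z / Cv = (Cv + z) / Cv" using assms by (simp add: field_simps)
  ultimately show ?thesis using assms by simp
qed

lemma frac_le:
  fixes Cv z :: real assumes "Cv > 0" "z \<ge> 0"
  shows "Cv * z / (Cv + z) \<le> Cv" "0 \<le> Cv * z / (Cv + z)"
proof -
  have p: "Cv + z > 0" using assms by simp
  have "Cv * z \<le> Cv * (Cv + z)" using assms by (intro mult_left_mono) auto
  then show "Cv * z / (Cv + z) \<le> Cv" using p by (simp add: pos_divide_le_eq)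
  show "0 \<le> Cv * z / (Cv + z)" using assms p by simp
qed

definition F :: "nat \<Rightarrow> 'a \<Rightarrow> real" where
  "F k x = C k * (U k * \<rho> x + d k) / (C k + (U k * \<rho> x + d k))"

lemma Fm[measurable]: "F k \<in> borel_measurable M"
  unfolding F_def by measurable

lemma drec': "d (Suc k) = (\<integral>x. F k x \<partial>M)"
  using drec unfolding F_def by simp

lemma dnn: "d k \<ge> 0"
proof (induction k)
  case 0 then show ?case using d0 by simp
next
  case (Suc k)
  show ?case unfolding drec'
  proof (rule Bochner_Integration.integral_nonneg_AE, rule AE_I2)
    fix x assume x: "x \<in> space M"
    have "U k * \<rho> x \<ge> 0" using Up rpx[OF x] by (simp add: less_imp_le)
    then show "0 \<le> F k x" unfolding F_def using Cp[rule_format, of k] Suc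
      by (intro divide_nonneg_nonneg mult_nonneg_nonneg) auto
  qed
qed

lemma Uq: "x \<in> space M \<Longrightarrow> U k * \<rho> x > 0"
  using Up rpx by simp

lemma Fint: "integrable M (F k)"
proof (rule int_bound[where B="C k"])
  show "F k \<in> borel_measurable M" by simp
  show "\<forall>x\<in>space M. \<bar>F k x\<bar> \<le> C k"
  proof
    fix x assume x: "x \<in> space M"
    define z where "z = U k * \<rho> x + d k"
    have z: "z > 0" unfolding z_def using Uq[OF x, of k] dnn[of k] by simp
    have "F k x = C k * z / (C k + z)" unfolding F_def z_def by simp
    moreover have "C k * z / (C k + z) \<le> C k" "C k * z / (C k + z) \<ge> 0"
      using frac_le[of "C k" z] z Cp by auto
    ultimately show "\<bar>F k x\<bar> \<le> C k" by (simp only: abs_of_nonneg)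
  qed
qed

lemma dpos: "d (Suc k) > 0"
  unfolding drec'
proof (rule int_pos[OF Fint], rule ballI)
  fix x assume x: "x \<in> space M"
  have "U k * \<rho> x + d k > 0" using Uq[OF x, of k] dnn[of k] by simp
  then show "F k x > 0" unfolding F_def using Cp[rule_format, of k]
    by (intro divide_pos_pos mult_pos_pos) auto
qed

lemma Drec: "d (Suc k) = C k * phi (U k / C k) (d k / C k)"
proof -
  have Ck: "C k > 0" using Cp by simp
  have q: "U k / C k \<ge> 0" "d k / C k \<ge> 0" using Ck Up dnn[of k] by (auto simp: less_imp_le)
  have "(\<integral>x. F k x \<partial>M) = (\<integral>x. C k * ((U k / C k * \<rho> x + d k / C k) / (1 + U k / C k * \<rho> x + d k / C k)) \<partial>M)"
  proof (rule Bochner_Integration.integral_cong)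
    fix x assume x: "x \<in> space M"
    have z: "U k * \<rho> x + d k > 0" using Uq[OF x, of k] dnn[of k] by simp
    have e: "U k / C k * \<rho> x + d k / C k = (U k * \<rho> x + d k) / C k" by (simp add: add_divide_distrib)
    show "F k x = C k * ((U k / C k * \<rho> x + d k / C k) / (1 + U k / C k * \<rho> x + d k / C k))"
      unfolding F_def using frac_resc[OF Ck, of "U k * \<rho> x + d k"] z e by (simp add: add.assoc)
  qed simp
  also have "\<dots> = C k * phi (U k / C k) (d k / C k)"
    unfolding phi_def by (rule integral_mult_right_zero)
  finally show ?thesis using drec' by simp
qed

lemma d_low: "C k * d k / (C k + d k) \<le> d (Suc k)"
proof -
  have Ck: "C k > 0" using Cp by simp
  have "(\<integral>x. C k * d k / (C k + d k) \<partial>M) \<le> (\<integral>x. F k x \<partial>M)"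
  proof (rule integral_mono[OF _ Fint])
    fix x assume x: "x \<in> space M"
    have u: "U k * \<rho> x \<ge> 0" using Uq[OF x, of k] by (simp add: less_imp_le)
    have "d k / (C k + d k) \<le> (U k * \<rho> x + d k) / (C k + (U k * \<rho> x + d k))"
      using u Ck dnn[of k] by (simp add: divide_simps) (simp add: algebra_simps)
    then have "C k * (d k / (C k + d k)) \<le> C k * ((U k * \<rho> x + d k) / (C k + (U k * \<rho> x + d k)))"
      using Ck by (intro mult_left_mono) auto
    then show "C k * d k / (C k + d k) \<le> F k x" unfolding F_def by simp
  qed simp
  then show ?thesis using drec' by (simp add: prob_space)
qed

lemma d_up: "d (Suc k) \<le> C k * d k / (C k + d k) + U k"
proof -
  have Ck: "C k > 0" using Cp by simp
  have "(\<integral>x. F k x \<partial>M) \<le> (\<integral>x. C k * d k / (C k + d k) + U k * \<rho> x \<partial>M)"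
  proof (rule integral_mono[OF Fint])
    show "integrable M (\<lambda>x. C k * d k / (C k + d k) + U k * \<rho> x)"
      using ri by simp
    fix x assume x: "x \<in> space M"
    define s where "s = U k * \<rho> x"
    have u: "s \<ge> 0" unfolding s_def using Uq[OF x, of k] by (simp add: less_imp_le)
    have dk: "d k \<ge> 0" using dnn by simp
    have "C k * (s + d k) / (C k + (s + d k)) - C k * d k / (C k + d k)
        = C k * C k * s / ((C k + (s + d k)) * (C k + d k))"
      using Ck u dk by (simp add: field_simps)
    also have "\<dots> \<le> C k * C k * s / (C k * C k)"
    proof (rule divide_left_mono)
      show "C k * C k \<le> (C k + (s + d k)) * (C k + d k)" using Ck u dk by (intro mult_mono) auto
    qed (use Ck u dk in auto)
    also have "\<dots> = s" using Ck by simp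
    finally show "F k x \<le> C k * d k / (C k + d k) + U k * \<rho> x"
      unfolding F_def s_def by simp
  qed
  also have "\<dots> = C k * d k / (C k + d k) + U k"
    using ri rE by (simp add: prob_space)
  finally show ?thesis using drec' by simp
qed

definition chi :: "real \<Rightarrow> real \<Rightarrow> real" where
  "chi K e = (\<integral>x. (\<rho> x + e) / (1 + K * (\<rho> x + e)) \<partial>M)"

definition eta :: "real \<Rightarrow> real \<Rightarrow> real" where
  "eta K B = (\<integral>x. K * (\<rho> x + B)^2 / (1 + K * (\<rho> x + B)) \<partial>M)"

lemma chi_int:
  assumes "K \<ge> 0" "e \<ge> 0"
  shows "integrable M (\<lambda>x. (\<rho> x + e) / (1 + K * (\<rho> x + e)))"
proof (rule Bochner_Integration.integrable_bound[where f="\<lambda>x. \<rho> x + e"])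
  show "integrable M (\<lambda>x. \<rho> x + e)" using ri by simp
  show "(\<lambda>x. (\<rho> x + e) / (1 + K * (\<rho> x + e))) \<in> borel_measurable M" by measurable
  show "AE x in M. norm ((\<rho> x + e) / (1 + K * (\<rho> x + e))) \<le> norm (\<rho> x + e)"
  proof (rule AE_I2)
    fix x assume x: "x \<in> space M"
    have z: "\<rho> x + e > 0" using rpx[OF x] assms by simp
    have "K * (\<rho> x + e) \<ge> 0" using z assms by simp
    then show "norm ((\<rho> x + e) / (1 + K * (\<rho> x + e))) \<le> norm (\<rho> x + e)"
      using z by (simp add: divide_simps)
  qed
qed

lemma eta_alg:
  fixes K w :: real assumes "K \<ge> 0" "w \<ge> 0"
  shows "K * w^2 / (1 + K * w) \<le> w" "0 \<le> K * w^2 / (1 + K * w)"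
proof -
  have p: "1 + K * w > 0" using assms by (simp add: add_pos_nonneg)
  show "K * w^2 / (1 + K * w) \<le> w" using p assms
    by (simp add: divide_simps power2_eq_square algebra_simps)
  show "0 \<le> K * w^2 / (1 + K * w)" using p assms by simp
qed

lemma norm_eta:
  fixes K w :: real assumes "K \<ge> 0" "w \<ge> 0"
  shows "norm (K * w^2 / (1 + K * w)) \<le> w"
proof -
  have "norm (K * w^2 / (1 + K * w)) = K * w^2 / (1 + K * w)"
    unfolding real_norm_def by (rule abs_of_nonneg[OF eta_alg(2)[OF assms]])
  then show ?thesis using eta_alg(1)[OF assms] by simp
qed

lemma eta_int:
  assumes "K \<ge> 0" "B \<ge> 0"
  shows "integrable M (\<lambda>x. K * (\<rho> x + B)^2 / (1 + K * (\<rho> x + B)))"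
proof (rule Bochner_Integration.integrable_bound[where f="\<lambda>x. \<rho> x + B"])
  show "integrable M (\<lambda>x. \<rho> x + B)" using ri by simp
  show "(\<lambda>x. K * (\<rho> x + B)^2 / (1 + K * (\<rho> x + B))) \<in> borel_measurable M" by measurable
  show "AE x in M. norm (K * (\<rho> x + B)^2 / (1 + K * (\<rho> x + B))) \<le> norm (\<rho> x + B)"
  proof (rule AE_I2)
    fix x assume x: "x \<in> space M"
    have z: "\<rho> x + B > 0" using rpx[OF x] assms by simp
    show "norm (K * (\<rho> x + B)^2 / (1 + K * (\<rho> x + B))) \<le> norm (\<rho> x + B)"
      using norm_eta[OF assms(1), of "\<rho> x + B"] z by simp
  qed
qed

lemma chi_alg:
  fixes K z w :: real assumes "K \<ge> 0" "0 \<le> z" "z \<le> w"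
  shows "z - K * w^2 / (1 + K * w) \<le> z / (1 + K * z)"
proof -
  have p: "1 + K * w > 0" "1 + K * z > 0" using assms by (auto simp: add_pos_nonneg)
  have "z - z / (1 + K * z) = K * z^2 / (1 + K * z)" using p by (simp add: field_simps power2_eq_square)
  also have "\<dots> \<le> K * w^2 / (1 + K * w)"
  proof -
    have "K * z^2 * (1 + K * w) \<le> K * w^2 * (1 + K * z)"
    proof -
      have "z^2 \<le> w^2" using assms by (intro power_mono) auto
      moreover have "z^2 * w \<le> w^2 * z"
      proof -
        have "(z * w) * z \<le> (z * w) * w" using assms by (intro mult_left_mono) auto
        then show ?thesis by (simp add: power2_eq_square algebra_simps)
      qed
      ultimately have "z^2 + K * (z^2 * w) \<le> w^2 + K * (w^2 * z)"
        using assms by (intro add_mono mult_left_mono) auto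
      then have "K * (z^2 + K * (z^2 * w)) \<le> K * (w^2 + K * (w^2 * z))"
        using assms by (intro mult_left_mono) auto
      then show ?thesis by (simp add: algebra_simps)
    qed
    then show ?thesis using p by (simp add: divide_simps)
  qed
  finally show ?thesis by simp
qed

lemma chi_bounds:
  assumes K: "K \<ge> 0" and e: "0 \<le> e" "e \<le> B"
  shows "chi K e \<le> 1 + e" "1 + e - eta K B \<le> chi K e"
proof -
  have B: "B \<ge> 0" using e by simp
  have "chi K e \<le> (\<integral>x. \<rho> x + e \<partial>M)" unfolding chi_def
  proof (rule integral_mono[OF chi_int[OF K e(1)]])
    show "integrable M (\<lambda>x. \<rho> x + e)" using ri by simp
    fix x assume x: "x \<in> space M"
    have z: "\<rho> x + e > 0" using rpx[OF x] e by simp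
    have "K * (\<rho> x + e) \<ge> 0" using z K by simp
    then show "(\<rho> x + e) / (1 + K * (\<rho> x + e)) \<le> \<rho> x + e" using z by (simp add: divide_simps)
  qed
  then show "chi K e \<le> 1 + e" using ri rE by (simp add: prob_space)
  have "(\<integral>x. \<rho> x + e - K * (\<rho> x + B)^2 / (1 + K * (\<rho> x + B)) \<partial>M) \<le> chi K e" unfolding chi_def
  proof (rule integral_mono[OF _ chi_int[OF K e(1)]])
    show "integrable M (\<lambda>x. \<rho> x + e - K * (\<rho> x + B)^2 / (1 + K * (\<rho> x + B)))"
      using ri eta_int[OF K B] by simp
    fix x assume x: "x \<in> space M"
    show "\<rho> x + e - K * (\<rho> x + B)^2 / (1 + K * (\<rho> x + B)) \<le> (\<rho> x + e) / (1 + K * (\<rho> x + e))"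
      using chi_alg[OF K, of "\<rho> x + e" "\<rho> x + B"] rpx[OF x] e by simp
  qed
  then show "1 + e - eta K B \<le> chi K e"
    unfolding eta_def using ri rE eta_int[OF K B] by (simp add: prob_space)
qed

lemma eta_lim:
  assumes K0: "\<forall>k. Kk k \<ge> 0" and K: "Kk \<longlonglongrightarrow> 0" and B: "B \<ge> 0"
  shows "(\<lambda>k. eta (Kk k) B) \<longlonglongrightarrow> 0"
proof -
  have "(\<lambda>k. (\<integral>x. Kk k * (\<rho> x + B)^2 / (1 + Kk k * (\<rho> x + B)) \<partial>M)) \<longlonglongrightarrow> (\<integral>x. 0 \<partial>M)"
  proof (rule integral_dominated_convergence[where w="\<lambda>x. \<rho> x + B"])
    show "(\<lambda>x. 0::real) \<in> borel_measurable M" by simp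
    show "\<And>k. (\<lambda>x. Kk k * (\<rho> x + B)^2 / (1 + Kk k * (\<rho> x + B))) \<in> borel_measurable M" by measurable
    show "integrable M (\<lambda>x. \<rho> x + B)" using ri by simp
    show "AE x in M. (\<lambda>k. Kk k * (\<rho> x + B)^2 / (1 + Kk k * (\<rho> x + B))) \<longlonglongrightarrow> 0"
    proof (rule AE_I2)
      fix x assume x: "x \<in> space M"
      have "(\<lambda>k. Kk k * (\<rho> x + B)^2 / (1 + Kk k * (\<rho> x + B))) \<longlonglongrightarrow> 0 * (\<rho> x + B)^2 / (1 + 0 * (\<rho> x + B))"
        by (intro tendsto_intros K) simp
      then show "(\<lambda>k. Kk k * (\<rho> x + B)^2 / (1 + Kk k * (\<rho> x + B))) \<longlonglongrightarrow> 0" by simp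
    qed
    show "AE x in M. norm (Kk k * (\<rho> x + B)^2 / (1 + Kk k * (\<rho> x + B))) \<le> \<rho> x + B" for k
    proof (rule AE_I2)
      fix x assume x: "x \<in> space M"
      have z: "\<rho> x + B > 0" using rpx[OF x] B by simp
      show "norm (Kk k * (\<rho> x + B)^2 / (1 + Kk k * (\<rho> x + B))) \<le> \<rho> x + B"
        using norm_eta[of "Kk k" "\<rho> x + B"] K0 z by simp
    qed
  qed
  then show ?thesis unfolding eta_def by simp
qed

lemma Erec: "d (Suc k) / U k = chi (U k / C k) (d k / U k)"
proof -
  have Ck: "C k > 0" and Uk: "U k > 0" using Cp Up by auto
  have "(\<integral>x. F k x \<partial>M) = (\<integral>x. U k * ((\<rho> x + d k / U k) / (1 + U k / C k * (\<rho> x + d k / U k))) \<partial>M)"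
  proof (rule Bochner_Integration.integral_cong)
    fix x assume x: "x \<in> space M"
    have z: "U k * \<rho> x + d k > 0" using Uq[OF x, of k] dnn[of k] by simp
    have e: "\<rho> x + d k / U k = (U k * \<rho> x + d k) / U k" using Uk by (simp add: field_simps)
    show "F k x = U k * ((\<rho> x + d k / U k) / (1 + U k / C k * (\<rho> x + d k / U k)))"
      unfolding F_def e using frac_resc2[OF Ck Uk, of "U k * \<rho> x + d k"] z by simp
  qed simp
  also have "\<dots> = U k * chi (U k / C k) (d k / U k)"
    unfolding chi_def by (rule integral_mult_right_zero)
  finally show ?thesis using drec' Uk by simp
qed

end

context recur
begin

lemma Drec': "d (Suc k) / C (Suc k) = C k / C (Suc k) * phi (U k / C k) (d k / C k)"
  using Drec[of k] Cp by (simp add: field_simps)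

lemma qnn: "U k / C k \<ge> 0" using Up Cp by (simp add: less_imp_le)
lemma Dnn: "d k / C k \<ge> 0" using dnn Cp by (simp add: less_imp_le)

lemma rlim:
  assumes "(\<lambda>k. C (Suc k) / C k) \<longlonglongrightarrow> c" "c > 0"
  shows "(\<lambda>k. C k / C (Suc k)) \<longlonglongrightarrow> 1 / c"
proof -
  have "(\<lambda>k. inverse (C (Suc k) / C k)) \<longlonglongrightarrow> inverse c" using assms by (intro tendsto_inverse) auto
  then show ?thesis by (simp add: inverse_eq_divide)
qed

lemma caseA:
  assumes r: "(\<lambda>k. C (Suc k) / C k) \<longlonglongrightarrow> c" and c: "c > 0"
    and q: "filterlim (\<lambda>k. U k / C k) at_top sequentially"
  shows "(\<lambda>k. d k / C k) \<longlonglongrightarrow> 1 / c"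
proof -
  have p: "(\<lambda>k. phi (U k / C k) (d k / C k)) \<longlonglongrightarrow> 1"
  proof (rule tendsto_sandwich[OF _ _ phi_infty[OF _ q] tendsto_const])
    show "\<forall>k. 0 \<le> U k / C k" using qnn by simp
    show "eventually (\<lambda>k. phi (U k / C k) 0 \<le> phi (U k / C k) (d k / C k)) sequentially"
      using phi_mono_D(1)[OF qnn _ Dnn] by simp
    show "eventually (\<lambda>k. phi (U k / C k) (d k / C k) \<le> 1) sequentially"
      using phi_lt1[OF qnn Dnn] by (simp add: less_imp_le)
  qed
  have "(\<lambda>k. C k / C (Suc k) * phi (U k / C k) (d k / C k)) \<longlonglongrightarrow> 1 / c * 1"
    by (intro tendsto_mult rlim[OF r c] p)
  moreover have "(\<lambda>k. d (Suc k) / C (Suc k)) = (\<lambda>k. C k / C (Suc k) * phi (U k / C k) (d k / C k))"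
    by (intro ext) (rule Drec')
  ultimately have "(\<lambda>k. d (Suc k) / C (Suc k)) \<longlonglongrightarrow> 1 / c" by simp
  then show ?thesis by (rule LIMSEQ_imp_Suc)
qed

lemma D_bounded:
  assumes r: "(\<lambda>k. C (Suc k) / C k) \<longlonglongrightarrow> c" and c: "c > 0"
  shows "\<exists>B. \<forall>k. d k / C k \<le> B"
proof -
  have "Bseq (\<lambda>k. C k / C (Suc k))" using rlim[OF r c] by (intro convergent_imp_Bseq) (auto simp: convergent_def)
  then obtain Rb where Rb: "\<forall>k. norm (C k / C (Suc k)) \<le> Rb" by (auto elim: BseqE)
  show ?thesis
  proof (intro exI allI)
    fix k show "d k / C k \<le> max (d 0 / C 0) Rb"
    proof (cases k)
      case 0 then show ?thesis by simp
    next
      case (Suc n)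
      have "d (Suc n) / C (Suc n) = C n / C (Suc n) * phi (U n / C n) (d n / C n)" by (rule Drec')
      also have "\<dots> \<le> C n / C (Suc n) * 1"
        using phi_lt1[OF qnn Dnn, of n] Cp by (intro mult_left_mono) (auto simp: less_imp_le)
      also have "\<dots> \<le> Rb" using Rb[rule_format, of n] abs_ge_self[of "C n / C (Suc n)"]
        unfolding real_norm_def by linarith
      finally show ?thesis using Suc by simp
    qed
  qed
qed

lemma phi_lip_q_abs:
  assumes "q \<ge> 0" "K \<ge> 0" "D \<ge> 0"
  shows "\<bar>phi q D - phi K D\<bar> \<le> \<bar>q - K\<bar>"
proof (cases "q \<le> K")
  case True
  then show ?thesis using phi_mono_q[OF assms(1) True assms(3)] by simp
next
  case False
  then have "K \<le> q" by simp
  then show ?thesis using phi_mono_q[OF assms(2) \<open>K \<le> q\<close> assms(3)] by (simp add: abs_le_iff)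
qed

lemma phi_K_mono: "\<forall>x y. 0 \<le> x \<longrightarrow> x \<le> y \<longrightarrow> phi K x \<le> phi K y" if "K \<ge> 0"
  using phi_mono_D(1) that by blast

lemma phi_K_lip: "\<forall>x y. 0 \<le> x \<longrightarrow> x \<le> y \<longrightarrow> phi K y - phi K x \<le> 1 * (y - x)" if "K \<ge> 0"
  using phi_mono_D(2) that by fastforce

lemma fp_above:
  assumes K: "K > 0" and c: "c > 0" and xs: "xs > 0" "c * xs = phi K xs" and y: "y > xs"
  shows "phi K y < c * y"
proof -
  define t where "t = y / xs"
  have t: "t > 1" "y = t * xs" unfolding t_def using xs y by (auto simp: field_simps)
  have "phi K (t * xs) + (t - 1) * phi K 0 \<le> t * phi K xs"
    using phi_scale[of K xs t] K xs t by simp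
  moreover have "(t - 1) * phi K 0 > 0" using t phi0_pos[OF K] by simp
  ultimately have "phi K y < t * phi K xs" using t by simp
  also have "\<dots> = c * y" using xs t by simp
  finally show ?thesis .
qed

lemma fp_below:
  assumes K: "K > 0" and c: "c > 0" and xs: "xs > 0" "c * xs = phi K xs" and y: "0 < y" "y < xs"
  shows "c * y < phi K y"
proof -
  define t where "t = xs / y"
  have t: "t > 1" "xs = t * y" unfolding t_def using xs y by (auto simp: field_simps)
  have "phi K (t * y) + (t - 1) * phi K 0 \<le> t * phi K y"
    using phi_scale[of K y t] K y t by simp
  moreover have "(t - 1) * phi K 0 > 0" using t phi0_pos[OF K] by simp
  ultimately have "t * (c * y) < t * phi K y" using t xs by (simp add: algebra_simps)
  then show ?thesis using t by simp
qed

lemma caseB: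
  assumes r: "(\<lambda>k. C (Suc k) / C k) \<longlonglongrightarrow> c" and c: "c > 0"
    and q: "(\<lambda>k. U k / C k) \<longlonglongrightarrow> K" and K: "K > 0"
  shows "\<exists>Mb. 0 < Mb \<and> Mb < 1 \<and> Mb = phi K (Mb / c) \<and>
           (\<forall>M'. 0 < M' \<and> M' < 1 \<and> M' = phi K (M' / c) \<longrightarrow> M' = Mb) \<and>
           (\<lambda>k. d k / C k) \<longlonglongrightarrow> Mb / c"
proof -
  have K0: "K \<ge> 0" using K by simp
  define h where "h x = phi K x - c * x" for x
  have cont: "continuous_on {0..1/c} h"
  proof -
    have "1-lipschitz_on {0..1/c} (phi K)"
      unfolding lipschitz_on_def dist_real_def
    proof (intro conjI ballI)
      fix x y :: real assume "x \<in> {0..1/c}" "y \<in> {0..1/c}"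
      then have xy: "x \<ge> 0" "y \<ge> 0" by auto
      show "\<bar>phi K x - phi K y\<bar> \<le> 1 * \<bar>x - y\<bar>"
      proof (cases "x \<le> y")
        case True then show ?thesis using phi_mono_D[OF K0 xy(1) True] by simp
      next
        case False then show ?thesis using phi_mono_D[OF K0 xy(2), of x] by simp
      qed
    qed simp
    then have "continuous_on {0..1/c} (phi K)" by (rule lipschitz_on_continuous_on)
    then show ?thesis unfolding h_def by (intro continuous_intros)
  qed
  have h0: "h 0 > 0" unfolding h_def using phi0_pos[OF K] by simp
  have h1: "h (1/c) < 0" unfolding h_def using phi_lt1[OF K0, of "1/c"] c by simp
  obtain xs where xs: "0 \<le> xs" "xs \<le> 1/c" "h xs = 0"
    using IVT2'[of h "1/c" 0 0, OF _ _ _ cont] h0 h1 c by auto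
  have xs0: "xs > 0" using xs h0 by (cases "xs = 0") auto
  have fxs: "c * xs = phi K xs" using xs unfolding h_def by simp
  have xs1: "xs < 1/c"
  proof -
    have "xs \<noteq> 1/c" using xs h1 by auto
    then show ?thesis using xs by simp
  qed
  define Mb where "Mb = c * xs"
  have Mb: "0 < Mb" "Mb < 1" "Mb / c = xs" unfolding Mb_def using xs0 xs1 c by (auto simp: field_simps)
  have Mbfix: "Mb = phi K (Mb / c)" using Mb fxs unfolding Mb_def by simp
  have uniq: "\<forall>M'. 0 < M' \<and> M' < 1 \<and> M' = phi K (M' / c) \<longrightarrow> M' = Mb"
  proof (intro allI impI)
    fix M' assume M': "0 < M' \<and> M' < 1 \<and> M' = phi K (M' / c)"
    define x' where "x' = M' / c"
    have x': "x' > 0" "c * x' = phi K x'" using M' c unfolding x'_def by auto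
    have "x' = xs"
    proof (rule ccontr)
      assume "x' \<noteq> xs"
      then consider "x' > xs" | "x' < xs" by linarith
      then show False
      proof cases
        case 1 then show False using fp_above[OF K c xs0 fxs 1] x' by simp
      next
        case 2 then show False using fp_below[OF K c xs0 fxs x'(1) 2] x' by simp
      qed
    qed
    then show "M' = Mb" unfolding Mb_def x'_def using c by (simp add: divide_eq_eq)
  qed
  obtain B where B: "\<forall>k. d k / C k \<le> B" using D_bounded[OF r c] by blast
  define e where "e k = phi (U k / C k) (d k / C k) - phi K (d k / C k)" for k
  have e: "e \<longlonglongrightarrow> 0"
  proof (rule tendsto_sandwich[of "\<lambda>k. - \<bar>U k / C k - K\<bar>" _ _ "\<lambda>k. \<bar>U k / C k - K\<bar>"])
    have ab: "- \<bar>U k / C k - K\<bar> \<le> e k \<and> e k \<le> \<bar>U k / C k - K\<bar>" for k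
      using phi_lip_q_abs[OF qnn[of k] K0 Dnn[of k]] unfolding e_def by (simp add: abs_le_iff)
    show "eventually (\<lambda>k. - \<bar>U k / C k - K\<bar> \<le> e k) sequentially"
      using ab by simp
    show "eventually (\<lambda>k. e k \<le> \<bar>U k / C k - K\<bar>) sequentially"
      using ab by simp
    have "(\<lambda>k. \<bar>U k / C k - K\<bar>) \<longlonglongrightarrow> \<bar>K - K\<bar>" by (intro tendsto_intros q)
    then show "(\<lambda>k. \<bar>U k / C k - K\<bar>) \<longlonglongrightarrow> 0" by simp
    then show "(\<lambda>k. - \<bar>U k / C k - K\<bar>) \<longlonglongrightarrow> 0" using tendsto_minus by fastforce
  qed
  have step: "\<forall>k. d (Suc k) / C (Suc k) = C k / C (Suc k) * (phi K (d k / C k) + e k)"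
    using Drec' unfolding e_def by simp
  have rpos: "\<forall>k. 0 \<le> C k / C (Suc k)" using Cp by (simp add: less_imp_le)
  obtain S where S: "0 \<le> S" "limsup (\<lambda>k. ereal (d k / C k)) = ereal S" "S \<le> 1/c * phi K S"
    using limsup_rec[of "\<lambda>k. d k / C k" B "\<lambda>k. C k / C (Suc k)" "1/c" e "phi K" 1,
        OF _ B rlim[OF r c] rpos e _ phi_K_mono[OF K0] phi_K_lip[OF K0]] Dnn step by auto
  obtain I where I: "0 \<le> I" "liminf (\<lambda>k. ereal (d k / C k)) = ereal I" "1/c * phi K I \<le> I"
    using liminf_rec[of "\<lambda>k. d k / C k" B "\<lambda>k. C k / C (Suc k)" "1/c" e "phi K" 1,
        OF _ B rlim[OF r c] rpos e _ phi_K_mono[OF K0] phi_K_lip[OF K0]] Dnn step by auto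
  have Sle: "S \<le> xs"
  proof (rule ccontr)
    assume "\<not> S \<le> xs"
    then have "phi K S < c * S" using fp_above[OF K c xs0 fxs] by simp
    moreover have "c * S \<le> phi K S" using S(3) c by (simp add: field_simps)
    ultimately show False by simp
  qed
  have Ige: "xs \<le> I"
  proof (rule ccontr)
    assume a: "\<not> xs \<le> I"
    have "phi K I \<le> c * I" using I(3) c by (simp add: field_simps)
    moreover have "c * I < phi K I"
    proof (cases "I = 0")
      case True then show ?thesis using phi0_pos[OF K] by simp
    next
      case False then show ?thesis using fp_below[OF K c xs0 fxs, of I] I(1) a by simp
    qed
    ultimately show False by simp
  qed
  have "(\<lambda>k. d k / C k) \<longlonglongrightarrow> xs"
    by (rule limsup_le_liminf_real) (use S(2) I(2) Sle Ige in auto)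
  then have "(\<lambda>k. d k / C k) \<longlonglongrightarrow> Mb / c" using Mb(3) by simp
  then show ?thesis using Mb(1,2) Mbfix uniq by blast
qed

end

context recur
begin

lemma err_lim:
  assumes q: "(\<lambda>k. U k / C k) \<longlonglongrightarrow> K" and K0: "K \<ge> 0"
  shows "(\<lambda>k. phi (U k / C k) (d k / C k) - phi K (d k / C k)) \<longlonglongrightarrow> 0"
proof (rule tendsto_sandwich[of "\<lambda>k. - \<bar>U k / C k - K\<bar>" _ _ "\<lambda>k. \<bar>U k / C k - K\<bar>"])
  have ab: "- \<bar>U k / C k - K\<bar> \<le> phi (U k / C k) (d k / C k) - phi K (d k / C k) \<and> phi (U k / C k) (d k / C k) - phi K (d k / C k) \<le> \<bar>U k / C k - K\<bar>" for k
    using phi_lip_q_abs[OF qnn[of k] K0 Dnn[of k]] by (simp add: abs_le_iff)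
  show "eventually (\<lambda>k. - \<bar>U k / C k - K\<bar> \<le> phi (U k / C k) (d k / C k) - phi K (d k / C k)) sequentially"
    using ab by simp
  show "eventually (\<lambda>k. phi (U k / C k) (d k / C k) - phi K (d k / C k) \<le> \<bar>U k / C k - K\<bar>) sequentially"
    using ab by simp
  have "(\<lambda>k. \<bar>U k / C k - K\<bar>) \<longlonglongrightarrow> \<bar>K - K\<bar>" by (intro tendsto_intros q)
  then show "(\<lambda>k. \<bar>U k / C k - K\<bar>) \<longlonglongrightarrow> 0" by simp
  then show "(\<lambda>k. - \<bar>U k / C k - K\<bar>) \<longlonglongrightarrow> 0" using tendsto_minus by fastforce
qed

lemma caseC1:
  assumes r: "(\<lambda>k. C (Suc k) / C k) \<longlonglongrightarrow> c" and c: "c > 0" "c < 1"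
    and q: "(\<lambda>k. U k / C k) \<longlonglongrightarrow> 0"
  shows "(\<lambda>k. d k / C k) \<longlonglongrightarrow> (1 - c) / c"
proof -
  define D where "D k = d k / C k" for k
  define r' where "r' k = C k / C (Suc k)" for k
  have D0: "\<forall>k. 0 \<le> D k" unfolding D_def using Dnn by simp
  obtain B where B: "\<forall>k. D k \<le> B" using D_bounded[OF r c(1)] unfolding D_def by blast
  define e where "e k = phi (U k / C k) (D k) - phi 0 (D k)" for k
  have e: "e \<longlonglongrightarrow> 0" unfolding e_def D_def using err_lim[OF q] by simp
  have step: "\<forall>k. D (Suc k) = r' k * (phi 0 (D k) + e k)"
    using Drec' unfolding e_def D_def r'_def by simp
  have rl: "r' \<longlonglongrightarrow> 1/c" unfolding r'_def by (rule rlim[OF r c(1)])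
  have rpos: "\<forall>k. 0 \<le> r' k" unfolding r'_def using Cp by (simp add: less_imp_le)
  have z0: "(0::real) \<ge> 0" by simp
  obtain S where S: "0 \<le> S" "limsup (\<lambda>k. ereal (D k)) = ereal S" "S \<le> 1/c * phi 0 S"
    using limsup_rec[of D B r' "1/c" e "phi 0" 1, OF D0 B rl rpos e _ phi_K_mono[OF z0] phi_K_lip[OF z0]] step by auto
  obtain I where I: "0 \<le> I" "liminf (\<lambda>k. ereal (D k)) = ereal I" "1/c * phi 0 I \<le> I"
    using liminf_rec[of D B r' "1/c" e "phi 0" 1, OF D0 B rl rpos e _ phi_K_mono[OF z0] phi_K_lip[OF z0]] step by auto
  define \<theta> where "\<theta> = (1 + 1/c) / 2"
  have th: "1 < \<theta>" "\<theta> < 1/c" unfolding \<theta>_def using c by (auto simp: field_simps)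
  obtain N where N: "\<forall>k\<ge>N. \<theta> < r' k"
    using order_tendstoD(1)[OF rl th(2)] by (auto simp: eventually_sequentially)
  define \<delta> where "\<delta> = (\<theta> - 1) / 2"
  have dl: "\<delta> > 0" "1 + \<delta> \<le> \<theta>" unfolding \<delta>_def using th by (auto simp: field_simps)
  define m where "m = min (D (Suc N)) \<delta>"
  have DSN: "D (Suc N) > 0" unfolding D_def using dpos Cp by simp
  have m0: "m > 0" unfolding m_def using DSN dl by simp
  have low: "D (Suc k) \<ge> \<theta> * (D k / (1 + D k))" if "k \<ge> N" for k
  proof -
    have "D (Suc k) = r' k * phi (U k / C k) (D k)" using Drec'[of k] unfolding D_def r'_def by simp
    also have "\<dots> \<ge> r' k * (D k / (1 + D k))" using phi_ge[OF qnn D0[rule_format]] rpos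
      by (intro mult_left_mono) auto
    moreover have "r' k * (D k / (1 + D k)) \<ge> \<theta> * (D k / (1 + D k))"
      using N that D0 by (intro mult_right_mono) (auto intro: less_imp_le)
    ultimately show ?thesis by simp
  qed
  have ind: "D (Suc N + n) \<ge> m" for n
  proof (induction n)
    case 0 then show ?case unfolding m_def by simp
  next
    case (Suc n)
    define x where "x = D (Suc N + n)"
    have x: "x \<ge> m" "x \<ge> 0" unfolding x_def using Suc D0 by auto
    have lowx: "D (Suc N + Suc n) \<ge> \<theta> * (x / (1 + x))" using low[of "Suc N + n"] unfolding x_def by simp
    show ?case
    proof (cases "x \<ge> \<delta>")
      case True
      have "\<delta> / (1 + \<delta>) \<le> x / (1 + x)" using g_mono[of \<delta> x] True dl by simp
      then have "\<theta> * (\<delta> / (1 + \<delta>)) \<le> \<theta> * (x / (1 + x))" using th by (intro mult_left_mono) auto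
      moreover have "(1 + \<delta>) * (\<delta> / (1 + \<delta>)) \<le> \<theta> * (\<delta> / (1 + \<delta>))"
        using dl by (intro mult_right_mono) auto
      moreover have "(1 + \<delta>) * (\<delta> / (1 + \<delta>)) = \<delta>" using dl by simp
      moreover have "m \<le> \<delta>" unfolding m_def by simp
      ultimately show ?thesis using lowx by linarith
    next
      case False
      have "x / (1 + \<delta>) \<le> x / (1 + x)" using False x by (intro divide_left_mono) auto
      then have "\<theta> * (x / (1 + \<delta>)) \<le> \<theta> * (x / (1 + x))" using th by (intro mult_left_mono) auto
      moreover have "(1 + \<delta>) * (x / (1 + \<delta>)) \<le> \<theta> * (x / (1 + \<delta>))"
        using dl x by (intro mult_right_mono) auto
      moreover have "(1 + \<delta>) * (x / (1 + \<delta>)) = x" using dl by simp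
      ultimately show ?thesis using lowx x by linarith
    qed
  qed
  have "eventually (\<lambda>k. ereal m \<le> ereal (D k)) sequentially"
    unfolding eventually_sequentially
  proof (intro exI allI impI)
    fix k assume "Suc N \<le> k"
    then have "k = Suc N + (k - Suc N)" by simp
    then show "ereal m \<le> ereal (D k)" using ind[of "k - Suc N"] by (metis ereal_less_eq(3))
  qed
  then have "ereal m \<le> liminf (\<lambda>k. ereal (D k))" by (rule Liminf_bounded)
  then have Im: "m \<le> I" using I(2) by simp
  have Ipos: "I > 0" using Im m0 by simp
  have Ige: "(1 - c) / c \<le> I"
  proof -
    have den: "c * (1 + I) > 0" using c Ipos by simp
    have "1/c * (I / (1 + I)) = I / (c * (1 + I))" by simp
    then have "I / (c * (1 + I)) \<le> I" using I(3) phi_zero by simp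
    then have "I \<le> I * (c * (1 + I))" using pos_divide_le_eq[OF den] by simp
    then have "1 * I \<le> (c * (1 + I)) * I" by (simp add: algebra_simps)
    then have "1 \<le> c * (1 + I)" using Ipos by (simp add: mult_le_cancel_right)
    then show ?thesis using c by (simp add: field_simps)
  qed
  have Sle: "S \<le> (1 - c) / c"
  proof (cases "S = 0")
    case True then show ?thesis using c by simp
  next
    case False
    then have Spos: "S > 0" using S(1) by simp
    have den: "c * (1 + S) > 0" using c Spos by simp
    have "1/c * (S / (1 + S)) = S / (c * (1 + S))" by simp
    then have "S \<le> S / (c * (1 + S))" using S(3) phi_zero by simp
    then have "S * (c * (1 + S)) \<le> S" using pos_le_divide_eq[OF den] by simp
    then have "(c * (1 + S)) * S \<le> 1 * S" by (simp add: algebra_simps)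
    then have "c * (1 + S) \<le> 1" using Spos by (simp add: mult_le_cancel_right)
    then show ?thesis using c by (simp add: field_simps)
  qed
  have "D \<longlonglongrightarrow> (1 - c) / c"
    by (rule limsup_le_liminf_real) (use S(2) I(2) Sle Ige in auto)
  then show ?thesis unfolding D_def .
qed

lemma caseC2:
  assumes s: "(\<lambda>k. U (Suc k) / U k) \<longlonglongrightarrow> \<mu>" and mu: "\<mu> > 1"
    and q: "(\<lambda>k. U k / C k) \<longlonglongrightarrow> 0"
  shows "(\<lambda>k. d k / U k) \<longlonglongrightarrow> 1 / (\<mu> - 1)"
proof -
  define E where "E k = d k / U k" for k
  define sr where "sr k = U k / U (Suc k)" for k
  have E0: "\<forall>k. 0 \<le> E k" unfolding E_def using dnn Up by (simp add: less_imp_le)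
  have srl: "sr \<longlonglongrightarrow> 1 / \<mu>"
  proof -
    have "(\<lambda>k. inverse (U (Suc k) / U k)) \<longlonglongrightarrow> inverse \<mu>" using s mu by (intro tendsto_inverse) auto
    then show ?thesis unfolding sr_def by (simp add: inverse_eq_divide)
  qed
  have srpos: "\<forall>k. 0 \<le> sr k" unfolding sr_def using Up by (simp add: less_imp_le)
  have Erec': "E (Suc k) = sr k * chi (U k / C k) (E k)" for k
  proof -
    have "d (Suc k) = U k * chi (U k / C k) (E k)"
      using Erec[of k] Up[rule_format, of k] unfolding E_def by (simp add: divide_eq_eq mult.commute)
    then show ?thesis unfolding E_def sr_def by simp
  qed
  have up: "E (Suc k) \<le> sr k * (1 + E k)" for k
    using Erec'[of k] chi_bounds(1)[OF qnn E0[rule_format] order_refl] srpos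
    by (simp add: mult_left_mono)
  have "Bseq sr" using srl by (intro convergent_imp_Bseq) (auto simp: convergent_def)
  then obtain Sb where Sb: "\<forall>k. norm (sr k) \<le> Sb" "Sb > 0" by (auto elim: BseqE)
  have "\<forall>k. E (Suc k) \<le> sr k * E k + Sb"
  proof
    fix k
    have "sr k \<le> Sb" using Sb(1)[rule_format, of k] srpos by simp
    then show "E (Suc k) \<le> sr k * E k + Sb" using up[of k] by (simp add: algebra_simps)
  qed
  then obtain B0 where B0: "\<forall>k. E k \<le> B0"
    using bounded_rec[of E sr Sb "1/\<mu>", OF E0 _ srl] mu Sb by auto
  define B where "B = max B0 0"
  have B: "\<forall>k. E k \<le> B" "B \<ge> 0" unfolding B_def using B0 by (auto simp: le_max_iff_disj)
  have low: "sr k * ((1 + E k) + - eta (U k / C k) B) \<le> E (Suc k)" for k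
    using Erec'[of k] chi_bounds(2)[OF qnn E0[rule_format] B(1)[rule_format]] srpos
    by (simp add: mult_left_mono)
  have etal: "(\<lambda>k. - eta (U k / C k) B) \<longlonglongrightarrow> 0"
    using tendsto_minus[OF eta_lim[OF _ q B(2)]] qnn by simp
  have mono1: "\<forall>x y. 0 \<le> x \<longrightarrow> x \<le> y \<longrightarrow> 1 + x \<le> 1 + (y::real)" by simp
  have lip1: "\<forall>x y. 0 \<le> x \<longrightarrow> x \<le> y \<longrightarrow> (1 + y) - (1 + x) \<le> 1 * (y - (x::real))" by simp
  obtain S where S: "0 \<le> S" "limsup (\<lambda>k. ereal (E k)) = ereal S" "S \<le> 1/\<mu> * (1 + S)"
    using limsup_rec[of E B sr "1/\<mu>" "\<lambda>_. 0" "\<lambda>x. 1 + x" 1, OF E0 B(1) srl srpos _ _ mono1 lip1] up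
    by auto
  obtain I where I: "0 \<le> I" "liminf (\<lambda>k. ereal (E k)) = ereal I" "1/\<mu> * (1 + I) \<le> I"
    using liminf_rec[of E B sr "1/\<mu>" "\<lambda>k. - eta (U k / C k) B" "\<lambda>x. 1 + x" 1, OF E0 B(1) srl srpos etal _ mono1 lip1] low
    by auto
  have Sle: "S \<le> 1 / (\<mu> - 1)"
  proof -
    have "\<mu> * S \<le> 1 + S" using S(3) mu by (simp add: field_simps)
    then have "(\<mu> - 1) * S \<le> 1" by (simp add: algebra_simps)
    then show ?thesis using mu by (simp add: field_simps)
  qed
  have Ige: "1 / (\<mu> - 1) \<le> I"
  proof -
    have "1 + I \<le> \<mu> * I" using I(3) mu by (simp add: field_simps)
    then have "1 \<le> (\<mu> - 1) * I" by (simp add: algebra_simps)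
    then show ?thesis using mu by (simp add: field_simps)
  qed
  have "E \<longlonglongrightarrow> 1 / (\<mu> - 1)"
    by (rule limsup_le_liminf_real) (use S(2) I(2) Sle Ige in auto)
  then show ?thesis unfolding E_def .
qed

end

context recur
begin

lemma inv_step_up:
  fixes Cv dd ee :: real
  assumes "Cv > 0" "dd > 0" "Cv * dd / (Cv + dd) \<le> ee"
  shows "1 / ee \<le> 1 / dd + 1 / Cv"
proof -
  have f: "Cv * dd / (Cv + dd) > 0" using assms by simp
  have e: "ee > 0" using f assms by linarith
  have "1 / ee \<le> 1 / (Cv * dd / (Cv + dd))" using assms f e by (intro divide_left_mono) (auto intro: mult_pos_pos)
  also have "\<dots> = 1 / dd + 1 / Cv" using assms by (simp add: field_simps)
  finally show ?thesis .
qed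

lemma inv_step_low:
  fixes Cv Uv dd ee :: real
  assumes "Cv > 0" "dd > 0" "Uv \<ge> 0" "ee \<le> Cv * dd / (Cv + dd) + Uv" "ee > 0"
  shows "(1 / dd + 1 / Cv) - Uv * (1 / dd + 1 / Cv)^2 \<le> 1 / ee"
proof -
  define y where "y = 1 / dd + 1 / Cv"
  have y: "y > 0" unfolding y_def using assms by (intro add_pos_pos) auto
  have f: "Cv * dd / (Cv + dd) = 1 / y" unfolding y_def using assms by (simp add: field_simps)
  have p: "1 / y + Uv > 0" using y assms by (simp add: add_pos_nonneg)
  have "1 / (1 / y + Uv) \<le> 1 / ee" using assms f p by (intro divide_left_mono) auto
  moreover have "1 / (1 / y + Uv) = y / (1 + Uv * y)" using y by (simp add: field_simps)
  moreover have "y - Uv * y^2 \<le> y / (1 + Uv * y)"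
  proof -
    have q: "1 + Uv * y > 0" using y assms by (simp add: add_pos_nonneg)
    have "(y - Uv * y^2) * (1 + Uv * y) = y - Uv^2 * y^3"
      by (simp add: algebra_simps power2_eq_square power3_eq_cube)
    also have "\<dots> \<le> y" using y assms by simp
    finally show ?thesis using q by (simp add: pos_le_divide_eq)
  qed
  ultimately show ?thesis unfolding y_def by simp
qed

lemma caseC3:
  fixes \<sigma> :: "nat \<Rightarrow> real"
  defines "\<sigma> \<equiv> \<lambda>k. \<Sum>l<k. 1 / C l"
  assumes sig: "filterlim \<sigma> at_top sequentially"
    and z: "(\<lambda>k. U k * C k * (\<sigma> (Suc k))^2) \<longlonglongrightarrow> 0"
  shows "(\<lambda>k. \<sigma> k * d k) \<longlonglongrightarrow> 1"
proof -
  have sS: "\<sigma> (Suc k) = \<sigma> k + 1 / C k" for k unfolding \<sigma>_def by simp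
  have s0: "\<sigma> 0 = 0" unfolding \<sigma>_def by simp
  have inc: "\<forall>k. \<sigma> k < \<sigma> (Suc k)" using sS Cp by simp
  have snn: "\<sigma> k \<ge> 0" for k unfolding \<sigma>_def using Cp by (simp add: sum_nonneg less_imp_le)
  have s1: "\<sigma> 1 > 0" using sS[of 0] s0 Cp by simp
  have sge1: "\<sigma> (Suc k) \<ge> \<sigma> 1" for k
  proof (induction k)
    case 0 then show ?case by simp
  next
    case (Suc k) then show ?case using inc[rule_format, of "Suc k"] by simp
  qed
  define X where "X n = 1 / d (Suc n)" for n
  define A where "A = X 0"
  have A0: "A > 0" unfolding A_def X_def using dpos by simp
  have Xup1: "X (Suc n) \<le> X n + 1 / C (Suc n)" for n
    unfolding X_def using inv_step_up[OF _ dpos d_low[of "Suc n"]] Cp by simp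
  have Xup: "X n \<le> A + \<sigma> (Suc n) - \<sigma> 1" for n
  proof (induction n)
    case 0 then show ?case unfolding A_def by simp
  next
    case (Suc n) then show ?case using Xup1[of n] sS[of "Suc n"] by simp
  qed
  define t where "t l = U l * (A + \<sigma> (Suc l))^2" for l
  have t0: "\<forall>l. 0 \<le> t l" unfolding t_def using Up by (simp add: less_imp_le)
  have Xlow1: "X (Suc n) \<ge> X n + 1 / C (Suc n) - t (Suc n)" for n
  proof -
    have l: "(1 / d (Suc n) + 1 / C (Suc n)) - U (Suc n) * (1 / d (Suc n) + 1 / C (Suc n))^2 \<le> 1 / d (Suc (Suc n))"
      using inv_step_low[OF _ dpos _ d_up dpos] Cp Up by (simp add: less_imp_le)
    have y: "0 \<le> X n + 1 / C (Suc n)" "X n + 1 / C (Suc n) \<le> A + \<sigma> (Suc (Suc n))"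
      using Xup[of n] sS[of "Suc n"] s1 dpos[of n] Cp unfolding X_def by (auto simp: less_imp_le)
    have "(X n + 1 / C (Suc n))^2 \<le> (A + \<sigma> (Suc (Suc n)))^2" using y by (intro power_mono) auto
    then have "U (Suc n) * (X n + 1 / C (Suc n))^2 \<le> t (Suc n)" unfolding t_def using Up
      by (intro mult_left_mono) (auto simp: less_imp_le)
    then show ?thesis using l unfolding X_def by simp
  qed
  define T where "T k = (\<Sum>l<k. t l)" for k
  have Xlow: "X n \<ge> A + \<sigma> (Suc n) - \<sigma> 1 - T (Suc n)" for n
  proof (induction n)
    case 0 then show ?case unfolding A_def T_def using t0 by simp
  next
    case (Suc n) then show ?case using Xlow1[of n] sS[of "Suc n"] unfolding T_def by simp
  qed
  have stz: "(\<lambda>k. T k / \<sigma> k) \<longlonglongrightarrow> 0"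
    unfolding T_def
  proof (rule stolz_zero[OF t0 inc sig])
    define Kc where "Kc = 2 * A^2 / (\<sigma> 1)^2 + 2"
    have bnd: "t k / (\<sigma> (Suc k) - \<sigma> k) \<le> Kc * (U k * C k * (\<sigma> (Suc k))^2)" for k
    proof -
      have Ck: "C k > 0" "U k > 0" using Cp Up by auto
      have "t k / (\<sigma> (Suc k) - \<sigma> k) = U k * C k * (A + \<sigma> (Suc k))^2"
        unfolding t_def using sS[of k] Ck by simp
      also have "(A + \<sigma> (Suc k))^2 \<le> 2 * A^2 + 2 * (\<sigma> (Suc k))^2"
      proof -
        have i: "(A + \<sigma> (Suc k))^2 = 2 * A^2 + 2 * (\<sigma> (Suc k))^2 - (A - \<sigma> (Suc k))^2"
          by (simp add: power2_eq_square algebra_simps)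
        have "0 \<le> (A - \<sigma> (Suc k))^2" by simp
        then show ?thesis using i by linarith
      qed
      then have "U k * C k * (A + \<sigma> (Suc k))^2 \<le> U k * C k * (2 * A^2 + 2 * (\<sigma> (Suc k))^2)"
        using Ck by (intro mult_left_mono) auto
      also have "2 * A^2 \<le> 2 * A^2 / (\<sigma> 1)^2 * (\<sigma> (Suc k))^2"
      proof -
        have "(\<sigma> 1)^2 \<le> (\<sigma> (Suc k))^2" using sge1[of k] s1 by (intro power_mono) auto
        then have "1 \<le> (\<sigma> (Suc k))^2 / (\<sigma> 1)^2" using s1 by simp
        then have "2 * A^2 * 1 \<le> 2 * A^2 * ((\<sigma> (Suc k))^2 / (\<sigma> 1)^2)" by (intro mult_left_mono) auto
        then show ?thesis by simp
      qed
      then have "U k * C k * (2 * A^2 + 2 * (\<sigma> (Suc k))^2) \<le> U k * C k * (2 * A^2 / (\<sigma> 1)^2 * (\<sigma> (Suc k))^2 + 2 * (\<sigma> (Suc k))^2)"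
        using Ck by (intro mult_left_mono) auto
      also have "\<dots> = Kc * (U k * C k * (\<sigma> (Suc k))^2)" unfolding Kc_def by (simp add: algebra_simps)
      finally show ?thesis .
    qed
    show "(\<lambda>k. t k / (\<sigma> (Suc k) - \<sigma> k)) \<longlonglongrightarrow> 0"
    proof (rule tendsto_sandwich[of "\<lambda>_. 0" _ _ "\<lambda>k. Kc * (U k * C k * (\<sigma> (Suc k))^2)"])
      show "eventually (\<lambda>k. 0 \<le> t k / (\<sigma> (Suc k) - \<sigma> k)) sequentially"
        using t0 inc by (simp add: less_imp_le)
      show "eventually (\<lambda>k. t k / (\<sigma> (Suc k) - \<sigma> k) \<le> Kc * (U k * C k * (\<sigma> (Suc k))^2)) sequentially"
        using bnd by simp
      show "(\<lambda>k. Kc * (U k * C k * (\<sigma> (Suc k))^2)) \<longlonglongrightarrow> 0"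
        using tendsto_mult[OF tendsto_const z, of Kc] by simp
    qed simp
  qed
  have sig1: "filterlim (\<lambda>n. \<sigma> (Suc n)) at_top sequentially"
    using sig by (simp add: filterlim_sequentially_Suc)
  have stz1: "(\<lambda>n. T (Suc n) / \<sigma> (Suc n)) \<longlonglongrightarrow> 0"
    using LIMSEQ_Suc[OF stz] by simp
  have cz: "(\<lambda>n. (A - \<sigma> 1) / \<sigma> (Suc n)) \<longlonglongrightarrow> 0"
    by (rule tendsto_divide_0[OF tendsto_const filterlim_at_top_imp_at_infinity[OF sig1]])
  have spos: "\<sigma> (Suc n) > 0" for n using sge1[of n] s1 by simp
  have R: "(\<lambda>n. X n / \<sigma> (Suc n)) \<longlonglongrightarrow> 1"
  proof (rule tendsto_sandwich[of "\<lambda>n. 1 + (A - \<sigma> 1) / \<sigma> (Suc n) - T (Suc n) / \<sigma> (Suc n)" _ _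
        "\<lambda>n. 1 + (A - \<sigma> 1) / \<sigma> (Suc n)"])
    show "eventually (\<lambda>n. 1 + (A - \<sigma> 1) / \<sigma> (Suc n) - T (Suc n) / \<sigma> (Suc n) \<le> X n / \<sigma> (Suc n)) sequentially"
    proof (rule always_eventually, rule allI)
      fix n
      have "1 + (A - \<sigma> 1) / \<sigma> (Suc n) - T (Suc n) / \<sigma> (Suc n) = (A + \<sigma> (Suc n) - \<sigma> 1 - T (Suc n)) / \<sigma> (Suc n)"
        using spos[of n] by (simp add: field_simps)
      also have "\<dots> \<le> X n / \<sigma> (Suc n)" using Xlow[of n] spos[of n] by (intro divide_right_mono) auto
      finally show "1 + (A - \<sigma> 1) / \<sigma> (Suc n) - T (Suc n) / \<sigma> (Suc n) \<le> X n / \<sigma> (Suc n)" .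
    qed
    show "eventually (\<lambda>n. X n / \<sigma> (Suc n) \<le> 1 + (A - \<sigma> 1) / \<sigma> (Suc n)) sequentially"
    proof (rule always_eventually, rule allI)
      fix n
      have "X n / \<sigma> (Suc n) \<le> (A + \<sigma> (Suc n) - \<sigma> 1) / \<sigma> (Suc n)"
        using Xup[of n] spos[of n] by (intro divide_right_mono) auto
      also have "\<dots> = 1 + (A - \<sigma> 1) / \<sigma> (Suc n)" using spos[of n] by (simp add: field_simps)
      finally show "X n / \<sigma> (Suc n) \<le> 1 + (A - \<sigma> 1) / \<sigma> (Suc n)" .
    qed
    show "(\<lambda>n. 1 + (A - \<sigma> 1) / \<sigma> (Suc n) - T (Suc n) / \<sigma> (Suc n)) \<longlonglongrightarrow> 1"
      using tendsto_diff[OF tendsto_add[OF tendsto_const cz] stz1, of 1] by simp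
    show "(\<lambda>n. 1 + (A - \<sigma> 1) / \<sigma> (Suc n)) \<longlonglongrightarrow> 1"
      using tendsto_add[OF tendsto_const cz, of 1] by simp
  qed
  have "(\<lambda>n. inverse (X n / \<sigma> (Suc n))) \<longlonglongrightarrow> inverse 1" by (intro tendsto_inverse R) simp
  moreover have "inverse (X n / \<sigma> (Suc n)) = \<sigma> (Suc n) * d (Suc n)" for n
    unfolding X_def using dpos[of n] spos[of n] by (simp add: field_simps)
  ultimately have "(\<lambda>n. \<sigma> (Suc n) * d (Suc n)) \<longlonglongrightarrow> 1" by simp
  then show ?thesis by (rule LIMSEQ_imp_Suc)
qed

end

lemma nonsum_to_infty:
  fixes f :: "nat \<Rightarrow> real"
  assumes f0: "\<forall>k. f k \<ge> 0" and ns: "\<not> summable f"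
  shows "filterlim (\<lambda>n. \<Sum>i<n. f i) at_top sequentially"
  unfolding filterlim_at_top
proof
  fix Z :: real
  have inc: "incseq (\<lambda>n. \<Sum>i<n. f i)"
    using f0 by (intro incseq_SucI) simp
  show "eventually (\<lambda>n. Z \<le> (\<Sum>i<n. f i)) sequentially"
  proof (rule ccontr)
    assume a: "\<not> eventually (\<lambda>n. Z \<le> (\<Sum>i<n. f i)) sequentially"
    have "\<forall>n. (\<Sum>i<n. f i) \<le> Z"
    proof (rule ccontr)
      assume "\<not> (\<forall>n. (\<Sum>i<n. f i) \<le> Z)"
      then obtain N where N: "Z < (\<Sum>i<N. f i)" by (auto simp: not_le)
      have "\<forall>n\<ge>N. Z \<le> (\<Sum>i<n. f i)"
        using N inc by (auto simp: incseq_def intro: order_trans[OF less_imp_le])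
      then show False using a by (auto simp: eventually_sequentially)
    qed
    then obtain L where "(\<lambda>n. \<Sum>i<n. f i) \<longlonglongrightarrow> L" using incseq_convergent[OF inc] by blast
    then have "summable f" unfolding summable_iff_convergent convergent_def by blast
    then show False using ns by simp
  qed
qed

lemma harmonic_div:
  fixes cb :: "nat \<Rightarrow> real"
  assumes sv: "slowly_varying L" and pos: "\<forall>k. cb k > 0"
    and eq: "cb \<sim>[sequentially] (\<lambda>k. L (real k) * real k powr a)" and a: "a < 1"
  shows "\<not> summable (\<lambda>k. 1 / cb k)"
proof
  assume sm: "summable (\<lambda>k. 1 / cb k)"
  have Lp: "\<And>x. x > 0 \<Longrightarrow> L x > 0" using sv unfolding slowly_varying_def by auto
  have q: "(\<lambda>k. cb k / (L (real k) * real k powr a)) \<longlonglongrightarrow> 1"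
    using asymp_equivD[OF eq] pos by (simp add: less_imp_neq[symmetric])
  obtain N1 where N1: "\<forall>k\<ge>N1. cb k / (L (real k) * real k powr a) < 2"
    using order_tendstoD(2)[OF q, of 2] by (auto simp: eventually_sequentially)
  obtain Bp X where BX: "X > 0" "\<forall>x\<ge>X. L x \<le> Bp * x powr (1 - a)"
    using sv_poly[OF sv, of "1 - a"] a by auto
  have Bp: "Bp > 0"
  proof -
    have "0 < L X" using Lp BX by simp
    also have "\<dots> \<le> Bp * X powr (1 - a)" using BX by simp
    finally show ?thesis using BX by (simp add: zero_less_mult_iff)
  qed
  obtain N2 :: nat where N2: "real N2 \<ge> X" by (meson real_arch_simple)
  have ev: "eventually (\<lambda>k. norm (inverse (real k)) \<le> 2 * Bp * (1 / cb k)) sequentially"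
    unfolding eventually_sequentially
  proof (intro exI allI impI)
    fix k assume k: "max (max N1 N2) 1 \<le> k"
    have kp: "real k > 0" using k by simp
    have kX: "real k \<ge> X" using k N2 by simp
    have g: "L (real k) * real k powr a > 0" using Lp[OF kp] kp by simp
    have "cb k < 2 * (L (real k) * real k powr a)" using N1 k g by (simp add: divide_less_eq)
    also have "\<dots> \<le> 2 * (Bp * real k powr (1 - a) * real k powr a)"
      using BX(2)[rule_format, OF kX] kp by (intro mult_left_mono mult_right_mono) auto
    also have "\<dots> = 2 * Bp * real k"
      using kp by (simp add: powr_add[symmetric] mult.assoc)
    finally have "cb k < 2 * Bp * real k" .
    then have "1 / (2 * Bp * real k) \<le> 1 / cb k" using pos Bp kp by (intro divide_left_mono) (auto intro: less_imp_le)
    then have "2 * Bp * (1 / (2 * Bp * real k)) \<le> 2 * Bp * (1 / cb k)" using Bp by (intro mult_left_mono) auto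
    moreover have "norm (inverse (real k)) = 2 * Bp * (1 / (2 * Bp * real k))" using Bp kp by (simp add: inverse_eq_divide)
    ultimately show "norm (inverse (real k)) \<le> 2 * Bp * (1 / cb k)" by simp
  qed
  have "summable (\<lambda>k. 2 * Bp * (1 / cb k))" using sm by (rule summable_mult)
  then have "summable (\<lambda>k. inverse (real k))" by (rule summable_comparison_test_ev[OF ev])
  then show False using not_summable_harmonic by blast
qed

theorem theorem3p11:
  fixes M :: "'a measure" and \<rho> :: "'a \<Rightarrow> real"
    and c \<mu> a b :: real and cbar \<mu>bar :: "nat \<Rightarrow> real"
    and Lc L\<mu> :: "real \<Rightarrow> real" and d :: "nat \<Rightarrow> real" and Kbar :: ereal
  assumes "prob_space M"
    and "\<rho> \<in> borel_measurable M"
    and "\<forall>x\<in>space M. \<rho> x > 0"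
    and "integrable M \<rho>" and "(\<integral>x. \<rho> x \<partial>M) = 1"
    and "c > 0" and "\<mu> > 0"
    and "\<forall>k. cbar k > 0" and "\<forall>k. \<mu>bar k > 0"
    and "slowly_varying Lc" and "slowly_varying L\<mu>"
    and "cbar \<sim>[sequentially] (\<lambda>k. Lc (real k) * real k powr a)"
    and "\<mu>bar \<sim>[sequentially] (\<lambda>k. L\<mu> (real k) * real k powr b)"
    and "(\<lambda>k. ereal (\<mu>bar k / cbar k)) \<longlonglongrightarrow> Kbar"
    and "d 0 \<ge> 0"
    and "\<forall>k. d (Suc k) = (\<integral>x. (c ^ k * cbar k) * ((\<mu> ^ k * \<mu>bar k) * \<rho> x + d k)
                 / ((c ^ k * cbar k) + ((\<mu> ^ k * \<mu>bar k) * \<rho> x + d k)) \<partial>M)"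
  shows
    "((c < \<mu> \<or> (c = \<mu> \<and> Kbar = \<infinity>)) \<longrightarrow>
        (\<lambda>k. d k / (c ^ k * cbar k)) \<longlonglongrightarrow> 1 / c)
   \<and> ((c = \<mu> \<and> 0 < Kbar \<and> Kbar < \<infinity>) \<longrightarrow>
        (\<exists>Mb. 0 < Mb \<and> Mb < 1 \<and>
           Mb = (\<integral>x. (c * real_of_ereal Kbar * \<rho> x + Mb)
                     / (c + (c * real_of_ereal Kbar * \<rho> x + Mb)) \<partial>M) \<and>
           (\<forall>M'. 0 < M' \<and> M' < 1 \<and>
              M' = (\<integral>x. (c * real_of_ereal Kbar * \<rho> x + M')
                     / (c + (c * real_of_ereal Kbar * \<rho> x + M')) \<partial>M) \<longrightarrow> M' = Mb) \<and>
           (\<lambda>k. d k / (c ^ k * cbar k)) \<longlonglongrightarrow> Mb / c))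
   \<and> ((c = \<mu> \<and> c < 1 \<and> Kbar = 0) \<longrightarrow>
        (\<lambda>k. d k / (c ^ k * cbar k)) \<longlonglongrightarrow> (1 - c) / c)
   \<and> ((c = \<mu> \<and> c > 1 \<and> Kbar = 0 \<and> \<not> summable (\<lambda>k. \<mu>bar k / cbar k)) \<longrightarrow>
        (\<lambda>k. d k / (\<mu> ^ k * \<mu>bar k)) \<longlonglongrightarrow> 1 / (\<mu> - 1))
   \<and> (((1 > c \<and> c > \<mu> \<and> Kbar = 0) \<or> (c = 1 \<and> c > \<mu> \<and> Kbar = 0 \<and> a < 1)) \<longrightarrow>
        (\<lambda>k. (\<Sum>l<k. 1 / (c ^ l * cbar l)) * d k) \<longlonglongrightarrow> 1)"
proof -
  define C where "C k = c ^ k * cbar k" for k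
  define U where "U k = \<mu> ^ k * \<mu>bar k" for k
  have cpos: "\<forall>k. C k > 0" unfolding C_def using assms(6,8) by simp
  have upos: "\<forall>k. U k > 0" unfolding U_def using assms(7,9) by simp
  have rec: "recur M \<rho> C U d"
    unfolding recur_def using assms(1-5,15,16) cpos upos unfolding C_def U_def by auto
  interpret R: recur M \<rho> C U d by (rule rec)
  have cr: "(\<lambda>k. cbar (Suc k) / cbar k) \<longlonglongrightarrow> 1" by (rule sv_seq_ratio[OF assms(10) assms(8) assms(12)])
  have mr: "(\<lambda>k. \<mu>bar (Suc k) / \<mu>bar k) \<longlonglongrightarrow> 1" by (rule sv_seq_ratio[OF assms(11) assms(9) assms(13)])
  have Cr: "(\<lambda>k. C (Suc k) / C k) \<longlonglongrightarrow> c"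
  proof -
    have "(\<lambda>k. c * (cbar (Suc k) / cbar k)) \<longlonglongrightarrow> c * 1" by (intro tendsto_mult tendsto_const cr)
    moreover have "C (Suc k) / C k = c * (cbar (Suc k) / cbar k)" for k
      unfolding C_def using assms(6,8) by (simp add: field_simps)
    ultimately show ?thesis by simp
  qed
  have Ur: "(\<lambda>k. U (Suc k) / U k) \<longlonglongrightarrow> \<mu>"
  proof -
    have "(\<lambda>k. \<mu> * (\<mu>bar (Suc k) / \<mu>bar k)) \<longlonglongrightarrow> \<mu> * 1" by (intro tendsto_mult tendsto_const mr)
    moreover have "U (Suc k) / U k = \<mu> * (\<mu>bar (Suc k) / \<mu>bar k)" for k
      unfolding U_def using assms(7,9) by (simp add: field_simps)
    ultimately show ?thesis by simp
  qed
  define Kk where "Kk k = \<mu>bar k / cbar k" for k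
  have Kpos: "Kk k > 0" for k unfolding Kk_def using assms(8,9) by simp
  have qK: "U k / C k = (\<mu> / c) ^ k * Kk k" for k
    unfolding U_def C_def Kk_def by (simp add: power_divide)
  have qKeq: "c = \<mu> \<Longrightarrow> U k / C k = Kk k" for k using qK assms(7) by simp
  have Klim: "(\<lambda>k. ereal (Kk k)) \<longlonglongrightarrow> Kbar" unfolding Kk_def using assms(14) .
  have K0lim: "Kbar = 0 \<Longrightarrow> Kk \<longlonglongrightarrow> 0" using Klim by (simp add: zero_ereal_def)
  show ?thesis
  proof (intro conjI impI)
    assume h: "c < \<mu> \<or> (c = \<mu> \<and> Kbar = \<infinity>)"
    have qinf: "filterlim (\<lambda>k. U k / C k) at_top sequentially"
    proof (cases "c < \<mu>")
      case True
      have "(\<lambda>k. (U (Suc k) / U k) / (C (Suc k) / C k)) \<longlonglongrightarrow> \<mu> / c"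
        using assms(6) by (intro tendsto_divide Ur Cr) simp
      moreover have eq: "(U (Suc k) / C (Suc k)) / (U k / C k) = (U (Suc k) / U k) / (C (Suc k) / C k)" for k
        using cpos upos by (simp add: field_simps)
      ultimately have "(\<lambda>k. (U (Suc k) / C (Suc k)) / (U k / C k)) \<longlonglongrightarrow> \<mu> / c" by (simp only: eq)
      then show ?thesis using True assms(6) cpos upos by (intro ratio_to_infty) auto
    next
      case False
      then have "c = \<mu>" "Kbar = \<infinity>" using h by auto
      then have "filterlim Kk at_top sequentially" using Klim tendsto_PInfty_eq_at_top by blast
      then show ?thesis using qKeq[OF \<open>c = \<mu>\<close>] by simp
    qed
    show "(\<lambda>k. d k / (c ^ k * cbar k)) \<longlonglongrightarrow> 1 / c"
      using R.caseA[OF Cr assms(6) qinf] unfolding C_def .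
  next
    assume h: "c = \<mu> \<and> 0 < Kbar \<and> Kbar < \<infinity>"
    obtain K where K: "Kbar = ereal K" "K > 0" using h by (cases Kbar) auto
    have q: "(\<lambda>k. U k / C k) \<longlonglongrightarrow> K" using Klim K qKeq h by simp
    obtain Mb where Mb: "0 < Mb" "Mb < 1" "Mb = R.phi K (Mb / c)"
      "\<forall>M'. 0 < M' \<and> M' < 1 \<and> M' = R.phi K (M' / c) \<longrightarrow> M' = Mb"
      "(\<lambda>k. d k / C k) \<longlonglongrightarrow> Mb / c"
      using R.caseB[OF Cr assms(6) q K(2)] by blast
    have conv: "R.phi K (Mv / c) = (\<integral>x. (c * real_of_ereal Kbar * \<rho> x + Mv) / (c + (c * real_of_ereal Kbar * \<rho> x + Mv)) \<partial>M)"
      if "Mv \<ge> 0" for Mv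
      unfolding R.phi_def
    proof (rule Bochner_Integration.integral_cong)
      fix x assume x: "x \<in> space M"
      define y where "y = c * K * \<rho> x + Mv"
      have y: "y \<ge> 0" unfolding y_def using R.rpx[OF x] K assms(6) that by simp
      have e1: "K * \<rho> x + Mv / c = y / c" unfolding y_def using assms(6) by (simp add: field_simps)
      have e2: "1 + K * \<rho> x + Mv / c = (c + y) / c" unfolding y_def using assms(6) by (simp add: field_simps)
      have "(K * \<rho> x + Mv / c) / (1 + K * \<rho> x + Mv / c) = y / (c + y)"
        unfolding e1 e2 using assms(6) y by simp
      then show "(K * \<rho> x + Mv / c) / (1 + K * \<rho> x + Mv / c) =
          (c * real_of_ereal Kbar * \<rho> x + Mv) / (c + (c * real_of_ereal Kbar * \<rho> x + Mv))"
        unfolding y_def using K by simp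
    qed simp
    show "\<exists>Mb. 0 < Mb \<and> Mb < 1 \<and>
           Mb = (\<integral>x. (c * real_of_ereal Kbar * \<rho> x + Mb)
                     / (c + (c * real_of_ereal Kbar * \<rho> x + Mb)) \<partial>M) \<and>
           (\<forall>M'. 0 < M' \<and> M' < 1 \<and>
              M' = (\<integral>x. (c * real_of_ereal Kbar * \<rho> x + M')
                     / (c + (c * real_of_ereal Kbar * \<rho> x + M')) \<partial>M) \<longrightarrow> M' = Mb) \<and>
           (\<lambda>k. d k / (c ^ k * cbar k)) \<longlonglongrightarrow> Mb / c"
    proof (intro exI conjI allI impI)
      show "0 < Mb" "Mb < 1" by (rule Mb(1), rule Mb(2))
      show "Mb = (\<integral>x. (c * real_of_ereal Kbar * \<rho> x + Mb) / (c + (c * real_of_ereal Kbar * \<rho> x + Mb)) \<partial>M)"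
        using Mb(3) conv[of Mb] Mb(1) by simp
      show "(\<lambda>k. d k / (c ^ k * cbar k)) \<longlonglongrightarrow> Mb / c" using Mb(5) unfolding C_def .
      fix M' assume M': "0 < M' \<and> M' < 1 \<and>
              M' = (\<integral>x. (c * real_of_ereal Kbar * \<rho> x + M') / (c + (c * real_of_ereal Kbar * \<rho> x + M')) \<partial>M)"
      then have "M' = R.phi K (M' / c)" using conv[of M'] by simp
      then show "M' = Mb" using Mb(4) M' by blast
    qed
  next
    assume h: "c = \<mu> \<and> c < 1 \<and> Kbar = 0"
    have q: "(\<lambda>k. U k / C k) \<longlonglongrightarrow> 0" using K0lim h qKeq by simp
    show "(\<lambda>k. d k / (c ^ k * cbar k)) \<longlonglongrightarrow> (1 - c) / c"
      using R.caseC1[OF Cr assms(6) _ q] h unfolding C_def by simp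
  next
    assume h: "c = \<mu> \<and> c > 1 \<and> Kbar = 0 \<and> \<not> summable (\<lambda>k. \<mu>bar k / cbar k)"
    have q: "(\<lambda>k. U k / C k) \<longlonglongrightarrow> 0" using K0lim h qKeq by simp
    show "(\<lambda>k. d k / (\<mu> ^ k * \<mu>bar k)) \<longlonglongrightarrow> 1 / (\<mu> - 1)"
      using R.caseC2[OF Ur _ q] h unfolding U_def by simp
  next
    assume h: "(1 > c \<and> c > \<mu> \<and> Kbar = 0) \<or> (c = 1 \<and> c > \<mu> \<and> Kbar = 0 \<and> a < 1)"
    have hc: "c > \<mu>" "c \<le> 1" "Kbar = 0" using h by auto
    have K0: "Kk \<longlonglongrightarrow> 0" using K0lim hc by simp
    define \<sigma> where "\<sigma> k = (\<Sum>l<k. 1 / C l)" for k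
    have sS: "\<sigma> (Suc k) = \<sigma> k + 1 / C k" for k unfolding \<sigma>_def by simp
    have snn: "\<sigma> k \<ge> 0" for k unfolding \<sigma>_def using cpos by (simp add: sum_nonneg less_imp_le)
    have sig: "filterlim \<sigma> at_top sequentially"
    proof (cases "c < 1")
      case True
      have "(\<lambda>k. inverse (C (Suc k) / C k)) \<longlonglongrightarrow> inverse c" using Cr assms(6) by (intro tendsto_inverse) auto
      moreover have "inverse (C (Suc k) / C k) = (1 / C (Suc k)) / (1 / C k)" for k using cpos by simp
      ultimately have "(\<lambda>k. (1 / C (Suc k)) / (1 / C k)) \<longlonglongrightarrow> 1 / c" by (simp add: inverse_eq_divide)
      then have w: "filterlim (\<lambda>k. 1 / C k) at_top sequentially"
        using True assms(6) cpos by (intro ratio_to_infty) auto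
      have "filterlim (\<lambda>k. \<sigma> (Suc k)) at_top sequentially"
        by (rule filterlim_at_top_mono[OF w]) (use sS snn in \<open>auto intro: always_eventually\<close>)
      then show ?thesis by (simp add: filterlim_sequentially_Suc)
    next
      case False
      then have c1: "c = 1" "a < 1" using h by auto
      have "\<not> summable (\<lambda>k. 1 / cbar k)" by (rule harmonic_div[OF assms(10) assms(8) assms(12) c1(2)])
      moreover have "C k = cbar k" for k unfolding C_def using c1 by simp
      ultimately show ?thesis unfolding \<sigma>_def using nonsum_to_infty[of "\<lambda>k. 1 / C k"] cpos
        by (simp add: less_imp_le)
    qed
    define v where "v k = \<sigma> (Suc k) * C k" for k
    have v0: "\<forall>k. 0 \<le> v k" unfolding v_def using snn cpos by (simp add: less_imp_le)
    have vstep: "\<forall>k. v (Suc k) \<le> C (Suc k) / C k * v k + 1"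
      unfolding v_def using sS cpos by (simp add: field_simps)
    define \<theta> where "\<theta> = sqrt ((1 + c / \<mu>) / 2)"
    have cm: "c / \<mu> > 1" using hc assms(7) by simp
    have th2: "\<theta>^2 = (1 + c / \<mu>) / 2" unfolding \<theta>_def using cm by simp
    have th1: "\<theta> > 1" unfolding \<theta>_def using cm by simp
    obtain Bv where Bv: "\<forall>k. v k \<le> Bv * \<theta> ^ k"
      using growth_rec[of v "\<lambda>k. C (Suc k) / C k" c \<theta>, OF v0 vstep Cr] th1 hc by auto
    define \<rho>0 where "\<rho>0 = \<mu> / c * \<theta>^2"
    have r0: "0 \<le> \<rho>0" "\<rho>0 < 1" unfolding \<rho>0_def th2 using assms(6,7) hc by (auto simp: field_simps)
    have zb: "U k * C k * (\<sigma> (Suc k))^2 \<le> Bv^2 * Kk k * \<rho>0 ^ k" for k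
    proof -
      have "U k * C k * (\<sigma> (Suc k))^2 = (U k / C k) * (v k)^2"
        unfolding v_def using cpos by (simp add: power2_eq_square field_simps)
      also have "\<dots> \<le> (U k / C k) * (Bv * \<theta> ^ k)^2"
        using v0 Bv upos cpos by (intro mult_left_mono power_mono) (auto simp: less_imp_le)
      also have "\<dots> = Bv^2 * Kk k * \<rho>0 ^ k"
      proof -
        have p1: "(\<theta> ^ k)^2 = (\<theta>^2)^k" by (simp add: power_mult[symmetric] mult.commute)
        have "(U k / C k) * (Bv * \<theta> ^ k)^2 = Bv^2 * Kk k * ((\<mu> / c) ^ k * (\<theta>^2)^k)"
          unfolding qK power_mult_distrib p1 by (simp add: algebra_simps)
        also have "(\<mu> / c) ^ k * (\<theta>^2)^k = \<rho>0 ^ k" unfolding \<rho>0_def by (rule power_mult_distrib[symmetric])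
        finally show ?thesis .
      qed
      finally show ?thesis .
    qed
    have z: "(\<lambda>k. U k * C k * (\<sigma> (Suc k))^2) \<longlonglongrightarrow> 0"
    proof (rule tendsto_sandwich[of "\<lambda>_. 0" _ _ "\<lambda>k. Bv^2 * Kk k * \<rho>0 ^ k"])
      show "eventually (\<lambda>k. 0 \<le> U k * C k * (\<sigma> (Suc k))^2) sequentially"
        using upos cpos by (simp add: less_imp_le)
      show "eventually (\<lambda>k. U k * C k * (\<sigma> (Suc k))^2 \<le> Bv^2 * Kk k * \<rho>0 ^ k) sequentially"
        using zb by simp
      have "(\<lambda>k. Bv^2 * Kk k * \<rho>0 ^ k) \<longlonglongrightarrow> Bv^2 * 0 * 0"
        by (intro tendsto_mult tendsto_const K0 LIMSEQ_power_zero) (use r0 in simp)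
      then show "(\<lambda>k. Bv^2 * Kk k * \<rho>0 ^ k) \<longlonglongrightarrow> 0" by simp
    qed simp
    have "(\<lambda>k. \<sigma> k * d k) \<longlonglongrightarrow> 1"
      using R.caseC3[OF sig[unfolded \<sigma>_def] z[unfolded \<sigma>_def]] unfolding \<sigma>_def .
    then show "(\<lambda>k. (\<Sum>l<k. 1 / (c ^ l * cbar l)) * d k) \<longlonglongrightarrow> 1"
      unfolding \<sigma>_def C_def .
  qed
qed

end
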